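(* Let $v\in\mathbb{Z}^d$ be primitive and $p$ an odd prime. Then $O_{v,p}=\bigsqcup_{h\in M}O_{v,p,h}$ (disjoint union of subsets of $\mathcal{Y}_p$), where $O_{v,p,h}=(\Delta K\times L_v(\mathbb{Z}_p))\cdot((k_v,h),(a_vk_vg_v,g_v^{-1}hg_v))\,\mathbb{G}(\mathbb{Z}[1/p])$.
   Context: Setup: $\mathbb{G}_1=\mathrm{SO}_d$, $\mathbb{G}_2=\mathrm{ASL}_{d-1}=\{\begin{pmatrix}g&*\\0&1\end{pmatrix}:g\in\mathrm{SL}_{d-1}\}$, $\mathbb{G}=\mathbb{G}_1\times\mathbb{G}_2$. Elements of $\mathbb{G}(\mathbb{R}\times\mathbb{Q}_p)$ are written $((g_{1,\infty},g_{1,p}),(g_{2,\infty},g_{2,p}))$ with $g_{i,\infty}\in\mathbb{G}_i(\mathbb{R})$, $g_{i,p}\in\mathbb{G}_i(\mathbb{Q}_p)$; $\mathbb{G}(\mathbb{Z}[1/p])$ is embedded diagonally, $(\gamma_1,\gamma_2)\mapsto((\gamma_1,\gamma_1),(\gamma_2,\gamma_2))$, and $\mathcal{Y}_p=\mathbb{G}(\mathbb{R}\times\mathbb{Q}_p)/\mathbb{G}(\mathbb{Z}[1/p])$. For primitive $v$: $\Lambda_v=v^\perp\cap\mathbb{Z}^d$; $H_v\le\mathrm{SO}_d$ the stabilizer of $v$; $g_v\in\mathrm{SL}_d(\mathbb{Z})$ a fixed matrix whose first $d-1$ columns form a positively oriented $\mathbb{Z}$-basis of $\Lambda_v$ (so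 $g_v^{-1}H_vg_v\le\mathrm{ASL}_{d-1}$); $L_v=\{(h,g_v^{-1}hg_v):h\in H_v\}\le\mathbb{G}$; $k_v\in\mathrm{SO}_d(\mathbb{R})$ fixed with $k_vv=\|v\|e_d$; $a_v=\mathrm{diag}(\|v\|^{-1/(d-1)},\dots,\|v\|^{-1/(d-1)},\|v\|)$, so that $a_vk_vg_v\in\mathrm{ASL}_{d-1}(\mathbb{R})$. With $e$ the identity, $O_{v,p}=((k_v,e),(a_vk_vg_v,e))\cdot L_v(\mathbb{R}\times\mathbb{Q}_p)\,\mathbb{G}(\mathbb{Z}[1/p])\subseteq\mathcal{Y}_p$. $M$ is a (finite) set of representatives of the double cosets in $H_v(\mathbb{Q}_p)=\bigsqcup_{h\in M}H_v(\mathbb{Z}_p)\,h\,H_v(\mathbb{Z}[1/p])$. $K=H_{e_d}(\mathbb{R})\cong\mathrm{SO}_{d-1}(\mathbb{R})$ and $\Delta K\times L_v(\mathbb{Z}_p)=\{((k,h'),(k,g_v^{-1}h'g_v)):k\in K,h'\in H_v(\mathbb{Z}_p)\}$, acting on $\mathcal{Y}_p$ from the left. *)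

theory Defs
  imports "Jordan_Normal_Form.Determinant" "HOL-Computational_Algebra.Factorial_Ring"
begin

definition padic_val :: "nat \<Rightarrow> rat \<Rightarrow> int" where
  "padic_val p q = (case quotient_of q of (a, b) \<Rightarrow>
      int (multiplicity (int p) a) - int (multiplicity (int p) b))"

definition padic_abs :: "nat \<Rightarrow> rat \<Rightarrow> real" where
  "padic_abs p q = (if q = 0 then 0 else real p powr (- real_of_int (padic_val p q)))"

text \<open>Q_p is the completion of Q w.r.t. the p-adic absolute value: an element of Q_p
  is represented by a p-adic Cauchy sequence of rationals, two representatives being
  equal in Q_p iff their difference is a p-adic null sequence.  Ring operations
  (hence matrix products, determinants, ...) act pointwise on representatives.\<close>
definition padic_cauchy :: "nat \<Rightarrow> (nat \<Rightarrow> rat) \<Rightarrow> bool" where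
  "padic_cauchy p x = (\<forall>e>0. \<exists>N. \<forall>m\<ge>N. \<forall>n\<ge>N. padic_abs p (x m - x n) < e)"

definition padic_null :: "nat \<Rightarrow> (nat \<Rightarrow> rat) \<Rightarrow> bool" where
  "padic_null p x = (\<forall>e>0. \<exists>N. \<forall>n\<ge>N. padic_abs p (x n) < e)"

text \<open>An element of Z_p: its representative is eventually p-integral
  (equivalently the limit has p-adic absolute value at most 1).\<close>
definition padic_integral :: "nat \<Rightarrow> (nat \<Rightarrow> rat) \<Rightarrow> bool" where
  "padic_integral p x = (\<exists>N. \<forall>n\<ge>N. padic_abs p (x n) \<le> 1)"

definition qp_mat :: "nat \<Rightarrow> nat \<Rightarrow> (nat \<Rightarrow> rat mat) \<Rightarrow> bool" where
  "qp_mat p d X = ((\<forall>n. X n \<in> carrier_mat d d) \<and>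
      (\<forall>i<d. \<forall>j<d. padic_cauchy p (\<lambda>n. X n $$ (i, j))))"

definition qp_mat_eq :: "nat \<Rightarrow> nat \<Rightarrow> (nat \<Rightarrow> rat mat) \<Rightarrow> (nat \<Rightarrow> rat mat) \<Rightarrow> bool" where
  "qp_mat_eq p d X Y = (\<forall>i<d. \<forall>j<d. padic_null p (\<lambda>n. X n $$ (i, j) - Y n $$ (i, j)))"

definition zp_mat :: "nat \<Rightarrow> nat \<Rightarrow> (nat \<Rightarrow> rat mat) \<Rightarrow> bool" where
  "zp_mat p d X = (\<forall>i<d. \<forall>j<d. padic_integral p (\<lambda>n. X n $$ (i, j)))"

definition seq_mult :: "(nat \<Rightarrow> rat mat) \<Rightarrow> (nat \<Rightarrow> rat mat) \<Rightarrow> (nat \<Rightarrow> rat mat)" where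
  "seq_mult X Y = (\<lambda>n. X n * Y n)"

definition topleft :: "nat \<Rightarrow> 'a mat \<Rightarrow> 'a mat" where
  "topleft d g = mat (d - 1) (d - 1) (\<lambda>(i, j). g $$ (i, j))"

definition SO_set :: "nat \<Rightarrow> 'a :: comm_ring_1 mat set" where
  "SO_set d = {g \<in> carrier_mat d d. transpose_mat g * g = 1\<^sub>m d \<and> det g = 1}"

text \<open>ASL_{d-1} realised as d x d matrices ((g, *), (0, 1)) with g in SL_{d-1}.\<close>
definition ASL_set :: "nat \<Rightarrow> 'a :: comm_ring_1 mat set" where
  "ASL_set d = {g \<in> carrier_mat d d. (\<forall>j<d - 1. g $$ (d - 1, j) = 0) \<and>
      g $$ (d - 1, d - 1) = 1 \<and> det (topleft d g) = 1}"

definition SO_Qp :: "nat \<Rightarrow> nat \<Rightarrow> (nat \<Rightarrow> rat mat) set" where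
  "SO_Qp p d = {X. qp_mat p d X \<and>
      qp_mat_eq p d (\<lambda>n. transpose_mat (X n) * X n) (\<lambda>n. 1\<^sub>m d) \<and>
      padic_null p (\<lambda>n. det (X n) - 1)}"

definition ASL_Qp :: "nat \<Rightarrow> nat \<Rightarrow> (nat \<Rightarrow> rat mat) set" where
  "ASL_Qp p d = {X. qp_mat p d X \<and>
      (\<forall>j<d - 1. padic_null p (\<lambda>n. X n $$ (d - 1, j))) \<and>
      padic_null p (\<lambda>n. X n $$ (d - 1, d - 1) - 1) \<and>
      padic_null p (\<lambda>n. det (topleft d (X n)) - 1)}"

definition in_Z_inv_p :: "nat \<Rightarrow> rat \<Rightarrow> bool" where
  "in_Z_inv_p p q = (\<exists>a::int. \<exists>k::nat. q = of_int a / of_nat p ^ k)"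

definition Z_inv_p_mat :: "nat \<Rightarrow> nat \<Rightarrow> rat mat \<Rightarrow> bool" where
  "Z_inv_p_mat p d g = (\<forall>i<d. \<forall>j<d. in_Z_inv_p p (g $$ (i, j)))"

text \<open>Elements of G(R x Q_p) = G_1(R x Q_p) x G_2(R x Q_p), written
  ((g_{1,inf}, g_{1,p}), (g_{2,inf}, g_{2,p})).\<close>
type_synonym gelt = "(real mat \<times> (nat \<Rightarrow> rat mat)) \<times> (real mat \<times> (nat \<Rightarrow> rat mat))"

definition G_set :: "nat \<Rightarrow> nat \<Rightarrow> gelt set" where
  "G_set p d = {((a, b), (c, e)). a \<in> SO_set d \<and> b \<in> SO_Qp p d \<and>
      c \<in> ASL_set d \<and> e \<in> ASL_Qp p d}"

fun gmul :: "gelt \<Rightarrow> gelt \<Rightarrow> gelt" where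
  "gmul ((a, b), (c, e)) ((a', b'), (c', e')) = ((a * a', seq_mult b b'), (c * c', seq_mult e e'))"

fun geq :: "nat \<Rightarrow> nat \<Rightarrow> gelt \<Rightarrow> gelt \<Rightarrow> bool" where
  "geq p d ((a, b), (c, e)) ((a', b'), (c', e')) =
     (a = a' \<and> qp_mat_eq p d b b' \<and> c = c' \<and> qp_mat_eq p d e e')"

text \<open>G(Z[1/p]) embedded diagonally.\<close>
definition Gamma_set :: "nat \<Rightarrow> nat \<Rightarrow> gelt set" where
  "Gamma_set p d = {((map_mat of_rat g1, \<lambda>n. g1), (map_mat of_rat g2, \<lambda>n. g2)) | g1 g2.
      g1 \<in> SO_set d \<and> Z_inv_p_mat p d g1 \<and> g2 \<in> ASL_set d \<and> Z_inv_p_mat p d g2}"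

text \<open>The point x G(Z[1/p]) of Y_p, as the set of all its representatives.\<close>
definition Ycos :: "nat \<Rightarrow> nat \<Rightarrow> gelt \<Rightarrow> gelt set" where
  "Ycos p d x = {y \<in> G_set p d. \<exists>\<gamma>\<in>Gamma_set p d. geq p d y (gmul x \<gamma>)}"

definition Y_space :: "nat \<Rightarrow> nat \<Rightarrow> gelt set set" where
  "Y_space p d = Ycos p d ` G_set p d"

definition primitive_vec :: "nat \<Rightarrow> int vec \<Rightarrow> bool" where
  "primitive_vec d v = (v \<in> carrier_vec d \<and>
      (\<forall>k::int. (\<forall>i<d. k dvd v $ i) \<longrightarrow> is_unit k))"

definition vnorm :: "int vec \<Rightarrow> real" where
  "vnorm v = sqrt (real_of_int (v \<bullet> v))"

definition Lambda :: "nat \<Rightarrow> int vec \<Rightarrow> int vec set" where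
  "Lambda d v = {w \<in> carrier_vec d. w \<bullet> v = 0}"

definition inv_mat :: "nat \<Rightarrow> 'a :: comm_ring_1 mat \<Rightarrow> 'a mat" where
  "inv_mat d g = (THE h. h \<in> carrier_mat d d \<and> h * g = 1\<^sub>m d)"

definition valid_gv :: "nat \<Rightarrow> int vec \<Rightarrow> int mat \<Rightarrow> bool" where
  "valid_gv d v g = (g \<in> carrier_mat d d \<and> det g = 1 \<and>
      (\<forall>j<d - 1. col g j \<in> Lambda d v) \<and>
      (\<forall>w\<in>Lambda d v. \<exists>c::nat \<Rightarrow> int. w = finsum_vec TYPE(int) d (\<lambda>j. c j \<cdot>\<^sub>v col g j) {..<d - 1}) \<and>
      det (mat d d (\<lambda>(i, j). if j < d - 1 then g $$ (i, j) else v $ i)) > 0)"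

definition e_last :: "nat \<Rightarrow> 'a :: zero_neq_one vec" where
  "e_last d = unit_vec d (d - 1)"

definition valid_kv :: "nat \<Rightarrow> int vec \<Rightarrow> real mat \<Rightarrow> bool" where
  "valid_kv d v k = (k \<in> SO_set d \<and> k *\<^sub>v map_vec real_of_int v = vnorm v \<cdot>\<^sub>v e_last d)"

definition a_mat :: "nat \<Rightarrow> int vec \<Rightarrow> real mat" where
  "a_mat d v = mat d d (\<lambda>(i, j). if i \<noteq> j then 0 else if i = d - 1 then vnorm v
      else vnorm v powr (- 1 / real (d - 1)))"

definition H_R :: "nat \<Rightarrow> int vec \<Rightarrow> real mat set" where
  "H_R d v = {h \<in> SO_set d. h *\<^sub>v map_vec real_of_int v = map_vec real_of_int v}"

definition H_Qp :: "nat \<Rightarrow> nat \<Rightarrow> int vec \<Rightarrow> (nat \<Rightarrow> rat mat) set" where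
  "H_Qp p d v = {X \<in> SO_Qp p d. \<forall>i<d.
      padic_null p (\<lambda>n. (X n *\<^sub>v map_vec rat_of_int v) $ i - rat_of_int (v $ i))}"

definition H_Zp :: "nat \<Rightarrow> nat \<Rightarrow> int vec \<Rightarrow> (nat \<Rightarrow> rat mat) set" where
  "H_Zp p d v = {X \<in> H_Qp p d v. zp_mat p d X}"

definition H_Zinvp :: "nat \<Rightarrow> nat \<Rightarrow> int vec \<Rightarrow> rat mat set" where
  "H_Zinvp p d v = {g \<in> SO_set d. Z_inv_p_mat p d g \<and>
      g *\<^sub>v map_vec rat_of_int v = map_vec rat_of_int v}"

definition K_set :: "nat \<Rightarrow> real mat set" where
  "K_set d = {k \<in> SO_set d. k *\<^sub>v e_last d = e_last d}"

definition conj_R :: "nat \<Rightarrow> int mat \<Rightarrow> real mat \<Rightarrow> real mat" where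
  "conj_R d g h = inv_mat d (map_mat real_of_int g) * h * map_mat real_of_int g"

definition conj_Qp :: "nat \<Rightarrow> int mat \<Rightarrow> (nat \<Rightarrow> rat mat) \<Rightarrow> (nat \<Rightarrow> rat mat)" where
  "conj_Qp d g X = (\<lambda>n. inv_mat d (map_mat rat_of_int g) * X n * map_mat rat_of_int g)"

definition Lv_RQp :: "nat \<Rightarrow> nat \<Rightarrow> int vec \<Rightarrow> int mat \<Rightarrow> gelt set" where
  "Lv_RQp p d v g = {((hr, hp), (conj_R d g hr, conj_Qp d g hp)) | hr hp.
      hr \<in> H_R d v \<and> hp \<in> H_Qp p d v}"

definition DeltaK_LvZp :: "nat \<Rightarrow> nat \<Rightarrow> int vec \<Rightarrow> int mat \<Rightarrow> gelt set" where
  "DeltaK_LvZp p d v g = {((k, h'), (k, conj_Qp d g h')) | k h'.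
      k \<in> K_set d \<and> h' \<in> H_Zp p d v}"

definition O_v :: "nat \<Rightarrow> nat \<Rightarrow> int vec \<Rightarrow> int mat \<Rightarrow> real mat \<Rightarrow> gelt set set" where
  "O_v p d v g k = {Ycos p d (gmul ((k, \<lambda>n. 1\<^sub>m d),
        (a_mat d v * k * map_mat real_of_int g, \<lambda>n. 1\<^sub>m d)) l) | l. l \<in> Lv_RQp p d v g}"

definition O_vh :: "nat \<Rightarrow> nat \<Rightarrow> int vec \<Rightarrow> int mat \<Rightarrow> real mat \<Rightarrow> (nat \<Rightarrow> rat mat) \<Rightarrow> gelt set set" where
  "O_vh p d v g k h = {Ycos p d (gmul u ((k, h),
        (a_mat d v * k * map_mat real_of_int g, conj_Qp d g h))) | u. u \<in> DeltaK_LvZp p d v g}"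

definition double_coset_reps :: "nat \<Rightarrow> nat \<Rightarrow> int vec \<Rightarrow> (nat \<Rightarrow> rat mat) set \<Rightarrow> bool" where
  "double_coset_reps p d v M = (finite M \<and> M \<subseteq> H_Qp p d v \<and>
     (\<forall>g\<in>H_Qp p d v. \<exists>h\<in>M. \<exists>a\<in>H_Zp p d v. \<exists>\<gamma>\<in>H_Zinvp p d v.
         qp_mat_eq p d g (\<lambda>n. a n * h n * \<gamma>)) \<and>
     (\<forall>h1\<in>M. \<forall>h2\<in>M. (\<exists>a1\<in>H_Zp p d v. \<exists>a2\<in>H_Zp p d v. \<exists>\<gamma>1\<in>H_Zinvp p d v. \<exists>\<gamma>2\<in>H_Zinvp p d v.
         qp_mat_eq p d (\<lambda>n. a1 n * h1 n * \<gamma>1) (\<lambda>n. a2 n * h2 n * \<gamma>2)) \<longrightarrow> h1 = h2))"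

end

theory Submission
  imports Defs
begin


lemma padic_val_frac:
  assumes p: "prime p" and a: "a \<noteq> 0" and b: "b \<noteq> 0" and q: "q = of_int a / of_int b"
  shows "padic_val p q = int (multiplicity (int p) a) - int (multiplicity (int p) b)"
proof -
  obtain a' b' where qo: "quotient_of q = (a', b')" by (cases "quotient_of q") auto
  have b'0: "b' > 0" using quotient_of_denom_pos[OF qo] .
  have qq: "q = of_int a' / of_int b'" using quotient_of_div[OF qo] .
  have "of_int a' / of_int b' = (of_int a / of_int b :: rat)" using q qq by simp
  hence "of_int (a' * b) = (of_int (a * b') :: rat)" using b b'0
    by (simp add: field_simps)
  hence eq: "a' * b = a * b'" by (simp only: of_int_eq_iff)
  have a'0: "a' \<noteq> 0" using eq a b b'0 by auto
  have pe: "prime_elem (int p)" using p by simp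
  have "multiplicity (int p) (a' * b) = multiplicity (int p) (a * b')" using eq by simp
  hence "multiplicity (int p) a' + multiplicity (int p) b = multiplicity (int p) a + multiplicity (int p) b'"
    using prime_elem_multiplicity_mult_distrib[OF pe] a b a'0 b'0 by simp
  thus ?thesis unfolding padic_val_def qo by simp
qed

lemma rat_frac_ex: "\<exists>a b. b \<noteq> 0 \<and> (q::rat) = of_int a / of_int b \<and> (q \<noteq> 0 \<longrightarrow> a \<noteq> 0)"
proof -
  obtain a b where qo: "quotient_of q = (a, b)" by (cases "quotient_of q") auto
  thus ?thesis using quotient_of_div[OF qo] quotient_of_denom_pos[OF qo]
    by (intro exI[of _ a] exI[of _ b]) auto
qed

lemma padic_val_mult:
  assumes p: "prime p" and "q \<noteq> 0" "r \<noteq> 0"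
  shows "padic_val p (q * r) = padic_val p q + padic_val p r"
proof -
  obtain a b where ab: "b \<noteq> 0" "q = of_int a / of_int b" "a \<noteq> 0" using rat_frac_ex[of q] assms by auto
  obtain c e where ce: "e \<noteq> 0" "r = of_int c / of_int e" "c \<noteq> 0" using rat_frac_ex[of r] assms by auto
  have pe: "prime_elem (int p)" using p by simp
  have "q * r = of_int (a*c) / of_int (b*e)" using ab ce by simp
  hence "padic_val p (q * r) = int (multiplicity (int p) (a*c)) - int (multiplicity (int p) (b*e))"
    by (intro padic_val_frac[OF p]) (use ab ce in auto)
  also have "\<dots> = padic_val p q + padic_val p r"
    using padic_val_frac[OF p _ _ ab(2)] padic_val_frac[OF p _ _ ce(2)] ab ce
      prime_elem_multiplicity_mult_distrib[OF pe] by simp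
  finally show ?thesis .
qed

lemma padic_val_add:
  assumes p: "prime p" and "q \<noteq> 0" "r \<noteq> 0" "q + r \<noteq> 0"
  shows "padic_val p (q + r) \<ge> min (padic_val p q) (padic_val p r)"
proof -
  obtain a b where ab: "b \<noteq> 0" "q = of_int a / of_int b" "a \<noteq> 0" using rat_frac_ex[of q] assms by auto
  obtain c e where ce: "e \<noteq> 0" "r = of_int c / of_int e" "c \<noteq> 0" using rat_frac_ex[of r] assms by auto
  have pe: "prime_elem (int p)" using p by simp
  have nu: "\<not> is_unit (int p)" using pe prime_elem_not_unit by blast
  have qr: "q + r = of_int (a*e + c*b) / of_int (b*e)" using ab ce by (simp add: field_simps)
  have s0: "a*e + c*b \<noteq> 0"
  proof
    assume "a*e + c*b = 0"
    hence "(of_int (a*e + c*b) :: rat) = 0" by simp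
    thus False using qr assms(4) by simp
  qed
  define m where "m = min (multiplicity (int p) (a*e)) (multiplicity (int p) (c*b))"
  have "int p ^ m dvd a*e" unfolding m_def
    by (meson min.cobounded1 multiplicity_dvd dvd_trans le_imp_power_dvd)
  moreover have "int p ^ m dvd c*b" unfolding m_def
    by (meson min.cobounded2 multiplicity_dvd dvd_trans le_imp_power_dvd)
  ultimately have "int p ^ m dvd a*e + c*b" by simp
  hence mle: "m \<le> multiplicity (int p) (a*e + c*b)" using multiplicity_geI[OF s0 nu] by blast
  have v1: "padic_val p (q+r) = int (multiplicity (int p) (a*e + c*b)) - int (multiplicity (int p) (b*e))"
    using padic_val_frac[OF p s0 _ qr] ab ce by simp
  have v2: "padic_val p q = int (multiplicity (int p) (a*e)) - int (multiplicity (int p) (b*e))"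
  proof -
    have "q = of_int (a*e) / of_int (b*e)" using ab ce by simp
    thus ?thesis by (intro padic_val_frac[OF p]) (use ab ce in auto)
  qed
  have v3: "padic_val p r = int (multiplicity (int p) (c*b)) - int (multiplicity (int p) (b*e))"
  proof -
    have "r = of_int (c*b) / of_int (b*e)" using ab ce by simp
    hence "padic_val p r = int (multiplicity (int p) (c*b)) - int (multiplicity (int p) (e*b))"
      by (intro padic_val_frac[OF p]) (use ab ce in \<open>auto simp: mult.commute\<close>)
    thus ?thesis by (simp add: mult.commute)
  qed
  show ?thesis using v1 v2 v3 mle unfolding m_def by linarith
qed

lemma pabs_nonneg: "padic_abs p q \<ge> 0"
  unfolding padic_abs_def by auto

lemma pabs_zero[simp]: "padic_abs p 0 = 0"
  unfolding padic_abs_def by auto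

lemma pabs_pos: "prime p \<Longrightarrow> q \<noteq> 0 \<Longrightarrow> padic_abs p q > 0"
  unfolding padic_abs_def using prime_gt_0_nat by auto

lemma pabs_mult: assumes p: "prime p" shows "padic_abs p (q * r) = padic_abs p q * padic_abs p r"
proof (cases "q = 0 \<or> r = 0")
  case True thus ?thesis by auto
next
  case False
  have "real p > 0" using p prime_gt_0_nat by auto
  thus ?thesis using False padic_val_mult[OF p, of q r] unfolding padic_abs_def
    by (simp add: powr_add[symmetric])
qed

lemma pabs_add: assumes p: "prime p" shows "padic_abs p (q + r) \<le> padic_abs p q + padic_abs p r"
proof (cases "q = 0 \<or> r = 0 \<or> q + r = 0")
  case True thus ?thesis using pabs_nonneg[of p] by auto
next
  case False
  have p1: "real p > 1" using p prime_gt_1_nat by auto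
  have mn: "padic_val p (q + r) \<ge> min (padic_val p q) (padic_val p r)" using padic_val_add[OF p] False by auto
  have "padic_abs p (q + r) = real p powr (- real_of_int (padic_val p (q+r)))" using False unfolding padic_abs_def by auto
  also have "\<dots> \<le> real p powr (- real_of_int (min (padic_val p q) (padic_val p r)))"
    using mn p1 by (intro powr_mono) auto
  also have "\<dots> \<le> padic_abs p q + padic_abs p r"
    using False unfolding padic_abs_def
    by (cases "padic_val p q \<le> padic_val p r") (auto simp: min_def)
  finally show ?thesis .
qed

lemma pabs_minus_one: assumes p: "prime p" shows "padic_abs p (-1) = 1"
proof -
  have "padic_val p (-1) = int (multiplicity (int p) (-1)) - int (multiplicity (int p) 1)"
    by (rule padic_val_frac[OF p]) auto
  hence "padic_val p (-1) = 0" by (simp add: multiplicity_unit_right)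
  thus ?thesis unfolding padic_abs_def using prime_gt_0_nat[OF p] by simp
qed

lemma pabs_uminus: assumes p: "prime p" shows "padic_abs p (- q) = padic_abs p q"
  using pabs_mult[OF p, of "-1" q] pabs_minus_one[OF p] by simp

lemma pabs_diff: assumes p: "prime p" shows "padic_abs p (q - r) \<le> padic_abs p q + padic_abs p r"
  using pabs_add[OF p, of q "-r"] pabs_uminus[OF p, of r] by simp

lemma pabs_eq0: "prime p \<Longrightarrow> padic_abs p q = 0 \<longleftrightarrow> q = 0"
  using pabs_pos[of p q] by force



definition ebdd :: "nat \<Rightarrow> (nat \<Rightarrow> rat) \<Rightarrow> bool" where
  "ebdd p f = (\<exists>B N. \<forall>n\<ge>N. padic_abs p (f n) \<le> B)"

lemma ebdd_pos: assumes "ebdd p f" obtains B N where "B > 0" "\<forall>n\<ge>N. padic_abs p (f n) \<le> B"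
proof -
  obtain B N where "\<forall>n\<ge>N. padic_abs p (f n) \<le> B" using assms unfolding ebdd_def by auto
  hence "\<forall>n\<ge>N. padic_abs p (f n) \<le> max B 1" by force
  thus ?thesis using that[of "max B 1" N] by auto
qed

context fixes p :: nat assumes p: "prime p"
begin

lemma null_add: assumes "padic_null p f" "padic_null p g" shows "padic_null p (\<lambda>n. f n + g n)"
  unfolding padic_null_def
proof (intro allI impI)
  fix e :: real assume e: "e > 0"
  obtain N1 where N1: "\<forall>n\<ge>N1. padic_abs p (f n) < e/2" using assms(1) e unfolding padic_null_def by (meson half_gt_zero)
  obtain N2 where N2: "\<forall>n\<ge>N2. padic_abs p (g n) < e/2" using assms(2) e unfolding padic_null_def by (meson half_gt_zero)
  show "\<exists>N. \<forall>n\<ge>N. padic_abs p (f n + g n) < e"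
  proof (intro exI allI impI)
    fix n assume n: "max N1 N2 \<le> n"
    have "padic_abs p (f n) < e/2" "padic_abs p (g n) < e/2" using N1 N2 n by auto
    thus "padic_abs p (f n + g n) < e" using pabs_add[OF p, of "f n" "g n"] by linarith
  qed
qed

lemma null_uminus: assumes "padic_null p f" shows "padic_null p (\<lambda>n. - f n)"
  using assms unfolding padic_null_def pabs_uminus[OF p] .

lemma null_diff: assumes "padic_null p f" "padic_null p g" shows "padic_null p (\<lambda>n. f n - g n)"
  using null_add[OF assms(1) null_uminus[OF assms(2)]] by simp

lemma null_zero: "padic_null p (\<lambda>n. 0)"
  unfolding padic_null_def by auto

lemma null_const_iff: "padic_null p (\<lambda>n. c) \<longleftrightarrow> c = 0"
proof
  assume "padic_null p (\<lambda>n. c)"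
  hence "\<forall>e>0. padic_abs p c < e" unfolding padic_null_def by auto
  show "c = 0"
  proof (rule ccontr)
    assume "c \<noteq> 0"
    hence "padic_abs p c > 0" using pabs_pos[OF p, of c] by simp
    hence "padic_abs p c < padic_abs p c" using \<open>\<forall>e>0. padic_abs p c < e\<close> by blast
    thus False by simp
  qed
qed (simp add: null_zero)

lemma null_cong: "padic_null p f \<Longrightarrow> (\<And>n. f n = g n) \<Longrightarrow> padic_null p g"
  by (metis ext)

lemma null_mult_bdd: assumes "padic_null p f" "ebdd p g" shows "padic_null p (\<lambda>n. f n * g n)"
  unfolding padic_null_def
proof (intro allI impI)
  fix e :: real assume e: "e > 0"
  obtain B N1 where B: "B > 0" "\<forall>n\<ge>N1. padic_abs p (g n) \<le> B" using ebdd_pos[OF assms(2)] by blast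
  obtain N2 where N2: "\<forall>n\<ge>N2. padic_abs p (f n) < e/B" using assms(1) e B(1) unfolding padic_null_def
    by (meson divide_pos_pos)
  show "\<exists>N. \<forall>n\<ge>N. padic_abs p (f n * g n) < e"
  proof (intro exI allI impI)
    fix n assume n: "max N1 N2 \<le> n"
    have "padic_abs p (f n * g n) = padic_abs p (f n) * padic_abs p (g n)" by (rule pabs_mult[OF p])
    also have "\<dots> \<le> padic_abs p (f n) * B" using B n by (intro mult_left_mono) (auto simp: pabs_nonneg)
    also have "\<dots> < e/B * B" using N2 n B by (intro mult_strict_right_mono) auto
    finally show "padic_abs p (f n * g n) < e" using B by simp
  qed
qed

lemma bdd_mult_null: assumes "ebdd p g" "padic_null p f" shows "padic_null p (\<lambda>n. g n * f n)"
  using null_mult_bdd[OF assms(2,1)] by (simp add: mult.commute)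

lemma null_sum: assumes "finite S" "\<And>k. k \<in> S \<Longrightarrow> padic_null p (f k)"
  shows "padic_null p (\<lambda>n. \<Sum>k\<in>S. f k n)"
  using assms by (induction S rule: finite_induct) (auto intro: null_add null_zero)

lemma ebdd_const: "ebdd p (\<lambda>n. c)"
  unfolding ebdd_def by auto

lemma ebdd_add: assumes "ebdd p f" "ebdd p g" shows "ebdd p (\<lambda>n. f n + g n)"
proof -
  obtain B1 N1 where 1: "\<forall>n\<ge>N1. padic_abs p (f n) \<le> B1" using assms(1) unfolding ebdd_def by auto
  obtain B2 N2 where 2: "\<forall>n\<ge>N2. padic_abs p (g n) \<le> B2" using assms(2) unfolding ebdd_def by auto
  have "\<forall>n\<ge>max N1 N2. padic_abs p (f n + g n) \<le> B1 + B2"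
  proof (intro allI impI)
    fix n assume n: "max N1 N2 \<le> n"
    have "padic_abs p (f n) \<le> B1" "padic_abs p (g n) \<le> B2" using 1 2 n by auto
    thus "padic_abs p (f n + g n) \<le> B1 + B2" using pabs_add[OF p, of "f n" "g n"] by linarith
  qed
  thus ?thesis unfolding ebdd_def by blast
qed

lemma ebdd_mult: assumes "ebdd p f" "ebdd p g" shows "ebdd p (\<lambda>n. f n * g n)"
proof -
  obtain B1 N1 where 1: "B1 > 0" "\<forall>n\<ge>N1. padic_abs p (f n) \<le> B1" using ebdd_pos[OF assms(1)] by blast
  obtain B2 N2 where 2: "B2 > 0" "\<forall>n\<ge>N2. padic_abs p (g n) \<le> B2" using ebdd_pos[OF assms(2)] by blast
  have "\<forall>n\<ge>max N1 N2. padic_abs p (f n * g n) \<le> B1 * B2"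
    using 1 2 by (auto simp: pabs_mult[OF p] intro!: mult_mono pabs_nonneg)
  thus ?thesis unfolding ebdd_def by blast
qed

lemma ebdd_sum: assumes "finite S" "\<And>k. k \<in> S \<Longrightarrow> ebdd p (f k)"
  shows "ebdd p (\<lambda>n. \<Sum>k\<in>S. f k n)"
  using assms by (induction S rule: finite_induct) (auto intro: ebdd_add ebdd_const)

lemma ebdd_prod: assumes "finite S" "\<And>k. k \<in> S \<Longrightarrow> ebdd p (f k)"
  shows "ebdd p (\<lambda>n. \<Prod>k\<in>S. f k n)"
  using assms by (induction S rule: finite_induct) (auto intro: ebdd_mult ebdd_const)

lemma null_ebdd: assumes "padic_null p f" shows "ebdd p f"
proof -
  obtain N where "\<forall>n\<ge>N. padic_abs p (f n) < 1" using assms[unfolded padic_null_def, rule_format, of 1] by auto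
  thus ?thesis unfolding ebdd_def by (meson less_imp_le)
qed

lemma cauchy_ebdd: assumes "padic_cauchy p f" shows "ebdd p f"
proof -
  obtain N where N: "\<forall>m\<ge>N. \<forall>n\<ge>N. padic_abs p (f m - f n) < 1" using assms[unfolded padic_cauchy_def, rule_format, of 1] by auto
  have "\<forall>n\<ge>N. padic_abs p (f n) \<le> padic_abs p (f N) + 1"
  proof (intro allI impI)
    fix n assume n: "N \<le> n"
    have "padic_abs p (f n) = padic_abs p ((f n - f N) + f N)" by simp
    also have "\<dots> \<le> padic_abs p (f n - f N) + padic_abs p (f N)" by (rule pabs_add[OF p])
    moreover have "padic_abs p (f n - f N) < 1" using N n by auto
    ultimately show "padic_abs p (f n) \<le> padic_abs p (f N) + 1" by linarith
  qed
  thus ?thesis unfolding ebdd_def by blast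
qed

lemma cauchy_add: assumes "padic_cauchy p f" "padic_cauchy p g" shows "padic_cauchy p (\<lambda>n. f n + g n)"
  unfolding padic_cauchy_def
proof (intro allI impI)
  fix e :: real assume e: "e > 0"
  obtain N1 where N1: "\<forall>m\<ge>N1. \<forall>n\<ge>N1. padic_abs p (f m - f n) < e/2" using assms(1) e unfolding padic_cauchy_def by (meson half_gt_zero)
  obtain N2 where N2: "\<forall>m\<ge>N2. \<forall>n\<ge>N2. padic_abs p (g m - g n) < e/2" using assms(2) e unfolding padic_cauchy_def by (meson half_gt_zero)
  show "\<exists>N. \<forall>m\<ge>N. \<forall>n\<ge>N. padic_abs p (f m + g m - (f n + g n)) < e"
  proof (intro exI allI impI)
    fix m n assume mn: "max N1 N2 \<le> m" "max N1 N2 \<le> n"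
    have eq: "f m + g m - (f n + g n) = (f m - f n) + (g m - g n)" by simp
    have "padic_abs p (f m - f n) < e/2" "padic_abs p (g m - g n) < e/2" using N1 N2 mn by auto
    thus "padic_abs p (f m + g m - (f n + g n)) < e"
      unfolding eq using pabs_add[OF p, of "f m - f n" "g m - g n"] by linarith
  qed
qed

lemma cauchy_const: "padic_cauchy p (\<lambda>n. c)"
  unfolding padic_cauchy_def by auto

lemma cauchy_mult: assumes "padic_cauchy p f" "padic_cauchy p g" shows "padic_cauchy p (\<lambda>n. f n * g n)"
  unfolding padic_cauchy_def
proof (intro allI impI)
  fix e :: real assume e: "e > 0"
  obtain B1 N1 where 1: "B1 > 0" "\<forall>n\<ge>N1. padic_abs p (f n) \<le> B1" using ebdd_pos[OF cauchy_ebdd[OF assms(1)]] by blast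
  obtain B2 N2 where 2: "B2 > 0" "\<forall>n\<ge>N2. padic_abs p (g n) \<le> B2" using ebdd_pos[OF cauchy_ebdd[OF assms(2)]] by blast
  define B where "B = B1 + B2"
  have B: "B > 0" "\<forall>n\<ge>max N1 N2. padic_abs p (f n) \<le> B \<and> padic_abs p (g n) \<le> B"
    using 1 2 unfolding B_def by auto
  define e' where "e' = e / (2 * B)"
  have e': "e' > 0" using e B unfolding e'_def by auto
  obtain N3 where N3: "\<forall>m\<ge>N3. \<forall>n\<ge>N3. padic_abs p (f m - f n) < e'" using assms(1) e' unfolding padic_cauchy_def by blast
  obtain N4 where N4: "\<forall>m\<ge>N4. \<forall>n\<ge>N4. padic_abs p (g m - g n) < e'" using assms(2) e' unfolding padic_cauchy_def by blast
  show "\<exists>N. \<forall>m\<ge>N. \<forall>n\<ge>N. padic_abs p (f m * g m - f n * g n) < e"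
  proof (intro exI allI impI)
    fix m n assume m: "max (max N1 N2) (max N3 N4) \<le> m" and n: "max (max N1 N2) (max N3 N4) \<le> n"
    have eq: "f m * g m - f n * g n = f m * (g m - g n) + (f m - f n) * g n" by (simp add: algebra_simps)
    have a: "padic_abs p (f m * (g m - g n)) \<le> B * e'"
      unfolding pabs_mult[OF p] using B m n N4 e' by (intro mult_mono) (auto simp: pabs_nonneg less_imp_le)
    have b: "padic_abs p ((f m - f n) * g n) \<le> e' * B"
      unfolding pabs_mult[OF p] using B m n N3 e' by (intro mult_mono) (auto simp: pabs_nonneg less_imp_le)
    have c: "padic_abs p (f m * (g m - g n)) < B * e'"
    proof -
      have "padic_abs p (f m * (g m - g n)) = padic_abs p (f m) * padic_abs p (g m - g n)" by (rule pabs_mult[OF p])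
      also have "\<dots> \<le> B * padic_abs p (g m - g n)" using B m by (intro mult_right_mono) (auto simp: pabs_nonneg)
      also have "\<dots> < B * e'" using B N4 m n by auto
      finally show ?thesis .
    qed
    have "padic_abs p (f m * g m - f n * g n) \<le> padic_abs p (f m * (g m - g n)) + padic_abs p ((f m - f n) * g n)"
      unfolding eq by (rule pabs_add[OF p])
    also have "\<dots> < B * e' + e' * B" using b c by linarith
    also have "\<dots> = e" unfolding e'_def using B by (simp add: field_simps)
    finally show "padic_abs p (f m * g m - f n * g n) < e" .
  qed
qed

lemma cauchy_sum: assumes "finite S" "\<And>k. k \<in> S \<Longrightarrow> padic_cauchy p (f k)"
  shows "padic_cauchy p (\<lambda>n. \<Sum>k\<in>S. f k n)"
  using assms by (induction S rule: finite_induct) (auto intro: cauchy_add cauchy_const)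

end


definition mnull :: "nat \<Rightarrow> nat \<Rightarrow> (nat \<Rightarrow> rat mat) \<Rightarrow> bool" where
  "mnull p m X = (\<forall>i<m. \<forall>j<m. padic_null p (\<lambda>n. X n $$ (i, j)))"

definition mbdd :: "nat \<Rightarrow> nat \<Rightarrow> (nat \<Rightarrow> rat mat) \<Rightarrow> bool" where
  "mbdd p m X = (\<forall>i<m. \<forall>j<m. ebdd p (\<lambda>n. X n $$ (i, j)))"

definition mcar :: "nat \<Rightarrow> (nat \<Rightarrow> 'a mat) \<Rightarrow> bool" where
  "mcar m X = (\<forall>n. X n \<in> carrier_mat m m)"

lemma idx_mult:
  assumes "A \<in> carrier_mat m m" "B \<in> carrier_mat m m" "i < m" "j < m"
  shows "(A * B) $$ (i, j) = (\<Sum>k<m. A $$ (i, k) * B $$ (k, j))"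
  using assms by (auto simp: scalar_prod_def lessThan_atLeast0 intro!: sum.cong)

lemma mcarD: "mcar m X \<Longrightarrow> dim_row (X n) = m \<and> dim_col (X n) = m"
  unfolding mcar_def by auto

lemma mcar_mult: "mcar m X \<Longrightarrow> mcar m Y \<Longrightarrow> mcar m (\<lambda>n. X n * Y n)"
  unfolding mcar_def using mult_carrier_mat by blast

lemma mcar_const: "C \<in> carrier_mat m m \<Longrightarrow> mcar m (\<lambda>n. C)"
  unfolding mcar_def by auto

lemma qp_mat_mcar: "qp_mat p m X \<Longrightarrow> mcar m X"
  unfolding qp_mat_def mcar_def by auto

context fixes p :: nat assumes p: "prime p"
begin

lemma mnull_mult_bdd: assumes "mcar m X" "mcar m Y" "mnull p m X" "mbdd p m Y"
  shows "mnull p m (\<lambda>n. X n * Y n)"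
  unfolding mnull_def
proof (intro allI impI)
  fix i j assume ij: "i < m" "j < m"
  have "padic_null p (\<lambda>n. \<Sum>k<m. X n $$ (i, k) * Y n $$ (k, j))"
    using assms(3,4) ij unfolding mnull_def mbdd_def
    by (intro null_sum[OF p]) (auto intro!: null_mult_bdd[OF p])
  thus "padic_null p (\<lambda>n. (X n * Y n) $$ (i, j))"
    proof (rule null_cong[OF p])
    fix n show "(\<Sum>k<m. X n $$ (i, k) * Y n $$ (k, j)) = (X n * Y n) $$ (i, j)"
      using idx_mult[of "X n" m "Y n" i j] assms(1,2) ij unfolding mcar_def by simp
  qed
qed

lemma mbdd_mult_null: assumes "mcar m X" "mcar m Y" "mbdd p m X" "mnull p m Y"
  shows "mnull p m (\<lambda>n. X n * Y n)"
  unfolding mnull_def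
proof (intro allI impI)
  fix i j assume ij: "i < m" "j < m"
  have "padic_null p (\<lambda>n. \<Sum>k<m. X n $$ (i, k) * Y n $$ (k, j))"
    using assms(3,4) ij unfolding mnull_def mbdd_def
    by (intro null_sum[OF p]) (auto intro!: bdd_mult_null[OF p])
  thus "padic_null p (\<lambda>n. (X n * Y n) $$ (i, j))"
    proof (rule null_cong[OF p])
    fix n show "(\<Sum>k<m. X n $$ (i, k) * Y n $$ (k, j)) = (X n * Y n) $$ (i, j)"
      using idx_mult[of "X n" m "Y n" i j] assms(1,2) ij unfolding mcar_def by simp
  qed
qed

lemma mbdd_mult: assumes "mcar m X" "mcar m Y" "mbdd p m X" "mbdd p m Y"
  shows "mbdd p m (\<lambda>n. X n * Y n)"
  unfolding mbdd_def
proof (intro allI impI)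
  fix i j assume ij: "i < m" "j < m"
  have "ebdd p (\<lambda>n. \<Sum>k<m. X n $$ (i, k) * Y n $$ (k, j))"
    using assms(3,4) ij unfolding mbdd_def
    by (intro ebdd_sum[OF p]) (auto intro!: ebdd_mult[OF p])
  moreover have "(\<Sum>k<m. X n $$ (i, k) * Y n $$ (k, j)) = (X n * Y n) $$ (i, j)" for n
      using idx_mult[of "X n" m "Y n" i j] assms(1,2) ij unfolding mcar_def by simp
  ultimately show "ebdd p (\<lambda>n. (X n * Y n) $$ (i, j))" by simp
qed

lemma qp_mat_mult: assumes "qp_mat p m X" "qp_mat p m Y"
  shows "qp_mat p m (\<lambda>n. X n * Y n)"
proof -
  have c: "mcar m X" "mcar m Y" using assms qp_mat_mcar by auto
  show ?thesis unfolding qp_mat_def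
  proof (intro conjI allI impI)
    fix n show "X n * Y n \<in> carrier_mat m m" using c mcar_mult unfolding mcar_def by blast
  next
    fix i j assume ij: "i < m" "j < m"
    have "padic_cauchy p (\<lambda>n. \<Sum>k<m. X n $$ (i, k) * Y n $$ (k, j))"
      using assms ij unfolding qp_mat_def
      by (intro cauchy_sum[OF p]) (auto intro!: cauchy_mult[OF p])
    moreover have "(\<Sum>k<m. X n $$ (i, k) * Y n $$ (k, j)) = (X n * Y n) $$ (i, j)" for n
      using idx_mult[of "X n" m "Y n" i j] c ij unfolding mcar_def by simp
    ultimately show "padic_cauchy p (\<lambda>n. (X n * Y n) $$ (i, j))" by simp
  qed
qed

lemma qp_mat_const: "C \<in> carrier_mat m m \<Longrightarrow> qp_mat p m (\<lambda>n. C)"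
  unfolding qp_mat_def by (auto intro: cauchy_const[OF p])

lemma mbdd_const: "mbdd p m (\<lambda>n. C)"
  unfolding mbdd_def by (auto intro: ebdd_const[OF p])

lemma qp_mat_mbdd: "qp_mat p m X \<Longrightarrow> mbdd p m X"
  unfolding qp_mat_def mbdd_def by (auto intro: cauchy_ebdd[OF p])

lemma mnull_mbdd: "mnull p m X \<Longrightarrow> mbdd p m X"
  unfolding mnull_def mbdd_def by (auto intro: null_ebdd[OF p])

lemma mnull_add: assumes "mcar m X" "mcar m Y" "mnull p m X" "mnull p m Y"
  shows "mnull p m (\<lambda>n. X n + Y n)"
  unfolding mnull_def
proof (intro allI impI)
  fix i j assume ij: "i < m" "j < m"
  have "padic_null p (\<lambda>n. X n $$ (i, j) + Y n $$ (i, j))"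
    using assms(3,4) ij unfolding mnull_def by (auto intro: null_add[OF p])
  thus "padic_null p (\<lambda>n. (X n + Y n) $$ (i, j))" using assms(1,2) ij by (simp add: mcarD)
qed

lemma mnull_diff: assumes "mcar m X" "mcar m Y" "mnull p m X" "mnull p m Y"
  shows "mnull p m (\<lambda>n. X n - Y n)"
  unfolding mnull_def
proof (intro allI impI)
  fix i j assume ij: "i < m" "j < m"
  have "padic_null p (\<lambda>n. X n $$ (i, j) - Y n $$ (i, j))"
    using assms(3,4) ij unfolding mnull_def by (auto intro: null_diff[OF p])
  thus "padic_null p (\<lambda>n. (X n - Y n) $$ (i, j))" using assms(1,2) ij by (simp add: mcarD)
qed

lemma mnull_uminus: assumes "mcar m X" "mnull p m X"
  shows "mnull p m (\<lambda>n. - X n)"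
  unfolding mnull_def
proof (intro allI impI)
  fix i j assume ij: "i < m" "j < m"
  have "padic_null p (\<lambda>n. - X n $$ (i, j))"
    using assms(2) ij unfolding mnull_def by (auto intro: null_uminus[OF p])
  thus "padic_null p (\<lambda>n. (- X n) $$ (i, j))" using assms(1) ij by (simp add: mcarD)
qed

lemma mnull_transpose: assumes "mcar m X" "mnull p m X"
  shows "mnull p m (\<lambda>n. transpose_mat (X n))"
  using assms unfolding mnull_def by (simp add: mcarD)

lemma mnull_cong: "mnull p m X \<Longrightarrow> (\<And>n. X n = Y n) \<Longrightarrow> mnull p m Y"
  by (metis ext)

lemma qp_mat_eq_iff: assumes "mcar m X" "mcar m Y"
  shows "qp_mat_eq p m X Y \<longleftrightarrow> mnull p m (\<lambda>n. X n - Y n)"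
  using assms unfolding qp_mat_eq_def mnull_def by (simp add: mcarD)

lemma det_ebdd: assumes "mcar m X" "mbdd p m X"
  shows "ebdd p (\<lambda>n. det (X n))"
proof -
  have "ebdd p (\<lambda>n. \<Sum>q \<in> {q. q permutes {0 ..< m}}. signof q * (\<Prod>i = 0 ..< m. X n $$ (i, q i)))"
  proof (intro ebdd_sum[OF p] ebdd_mult[OF p] ebdd_const[OF p] ebdd_prod[OF p])
    show "finite {q. q permutes {0..<m}}" by (simp add: finite_permutations)
  next
    fix q i assume q: "q \<in> {q. q permutes {0..<m}}" and i: "i \<in> {0..<m}"
    have "q i < m" using q i by (auto dest: permutes_in_image)
    thus "ebdd p (\<lambda>n. X n $$ (i, q i))" using assms(2) i unfolding mbdd_def by auto
  qed simp
  thus ?thesis using det_def'[of "X _" m] assms(1) unfolding mcar_def by simp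
qed

end


definition lastrow_e :: "nat \<Rightarrow> 'a :: zero_neq_one mat \<Rightarrow> bool" where
  "lastrow_e d M = (\<forall>j<d. M $$ (d - 1, j) = (if j = d - 1 then 1 else 0))"

lemma sum_lessThan_split_last:
  fixes d :: nat assumes "1 \<le> d" shows "(\<Sum>k<d. f k) = (\<Sum>k<d-1. f k) + (f (d - 1) :: 'a :: comm_monoid_add)"
proof -
  obtain e where "d = Suc e" using assms by (cases d) auto
  thus ?thesis by simp
qed

lemma mat_delete_last_topleft:
  assumes "M \<in> carrier_mat d d" shows "mat_delete M (d - 1) (d - 1) = topleft d M"
  using assms unfolding mat_delete_def topleft_def by (intro eq_matI) auto

lemma det_last_expand:
  assumes M: "(M :: 'a :: comm_ring_1 mat) \<in> carrier_mat d d" and d: "1 \<le> d"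
  shows "det M = (\<Sum>j<d-1. M $$ (d - 1, j) * cofactor M (d - 1) j) + M $$ (d - 1, d - 1) * det (topleft d M)"
proof -
  have "det M = (\<Sum>j<d. M $$ (d - 1, j) * cofactor M (d - 1) j)"
    using laplace_expansion_row[OF M] d by simp
  also have "\<dots> = (\<Sum>j<d-1. M $$ (d - 1, j) * cofactor M (d - 1) j) + M $$ (d - 1, d - 1) * cofactor M (d - 1) (d - 1)"
    by (rule sum_lessThan_split_last[OF d])
  also have "cofactor M (d - 1) (d - 1) = det (topleft d M)"
    unfolding cofactor_def mat_delete_last_topleft[OF M]
    by (simp add: mult_2[symmetric])
  finally show ?thesis .
qed

lemma det_topleft_lastrow:
  assumes M: "(M :: 'a :: comm_ring_1 mat) \<in> carrier_mat d d" and d: "1 \<le> d" and L: "lastrow_e d M"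
  shows "det (topleft d M) = det M"
proof -
  have "(\<Sum>j<d-1. M $$ (d - 1, j) * cofactor M (d - 1) j) = 0"
    using L d unfolding lastrow_e_def by (intro sum.neutral) auto
  moreover have "M $$ (d - 1, d - 1) = 1" using L d unfolding lastrow_e_def by auto
  ultimately show ?thesis using det_last_expand[OF M d] by simp
qed

lemma lastrow_alt:
  assumes d: "1 \<le> d"
  shows "lastrow_e d (M :: 'a :: zero_neq_one mat) \<longleftrightarrow> (\<forall>j<d - 1. M $$ (d - 1, j) = 0) \<and> M $$ (d - 1, d - 1) = 1"
proof
  assume L: "lastrow_e d M"
  show "(\<forall>j<d - 1. M $$ (d - 1, j) = 0) \<and> M $$ (d - 1, d - 1) = 1"
  proof (intro conjI allI impI)
    fix j assume "j < d - 1" thus "M $$ (d - 1, j) = 0" using L unfolding lastrow_e_def by auto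
  next
    show "M $$ (d - 1, d - 1) = 1" using L d unfolding lastrow_e_def by auto
  qed
next
  assume R: "(\<forall>j<d - 1. M $$ (d - 1, j) = 0) \<and> M $$ (d - 1, d - 1) = 1"
  show "lastrow_e d M" unfolding lastrow_e_def
  proof (intro allI impI)
    fix j assume j: "j < d"
    show "M $$ (d - 1, j) = (if j = d - 1 then 1 else 0)"
    proof (cases "j = d - 1")
      case True thus ?thesis using R by simp
    next
      case False hence "j < d - 1" using j by linarith
      thus ?thesis using R False by simp
    qed
  qed
qed

lemma ASL_iff:
  assumes d: "1 \<le> d"
  shows "(M :: 'a :: comm_ring_1 mat) \<in> ASL_set d \<longleftrightarrow> M \<in> carrier_mat d d \<and> lastrow_e d M \<and> det M = 1"
proof
  assume "M \<in> ASL_set d"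
  thus "M \<in> carrier_mat d d \<and> lastrow_e d M \<and> det M = 1"
    unfolding ASL_set_def lastrow_alt[OF d] using det_topleft_lastrow[OF _ d, of M] lastrow_alt[OF d, of M] by auto
next
  assume "M \<in> carrier_mat d d \<and> lastrow_e d M \<and> det M = 1"
  thus "M \<in> ASL_set d"
    unfolding ASL_set_def using det_topleft_lastrow[OF _ d, of M] lastrow_alt[OF d, of M] by auto
qed

lemma lastrow_mult_idx:
  assumes A: "(A :: 'a :: comm_ring_1 mat) \<in> carrier_mat d d" and B: "B \<in> carrier_mat d d"
    and L: "lastrow_e d A" and j: "j < d"
  shows "(A * B) $$ (d - 1, j) = B $$ (d - 1, j)"
proof -
  have d: "1 \<le> d" using j by auto
  have "(A * B) $$ (d - 1, j) = (\<Sum>k<d. A $$ (d - 1, k) * B $$ (k, j))"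
    using idx_mult[OF A B _ j] d by simp
  also have "\<dots> = (\<Sum>k<d. if k = d - 1 then B $$ (k, j) else 0)"
    using L unfolding lastrow_e_def by (intro sum.cong) auto
  also have "\<dots> = B $$ (d - 1, j)" using d by (simp add: sum.delta')
  finally show ?thesis .
qed

lemma lastrow_mult:
  assumes A: "(A :: 'a :: comm_ring_1 mat) \<in> carrier_mat d d" and B: "B \<in> carrier_mat d d"
    and "lastrow_e d A" "lastrow_e d B"
  shows "lastrow_e d (A * B)"
  using lastrow_mult_idx[OF A B assms(3)] assms(4) unfolding lastrow_e_def by auto

lemma ASL_mult:
  assumes d: "1 \<le> d" and "(A :: 'a :: comm_ring_1 mat) \<in> ASL_set d" "B \<in> ASL_set d"
  shows "A * B \<in> ASL_set d"
  using assms lastrow_mult[of A d B] det_mult[of A d B] unfolding ASL_iff[OF d] by auto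

lemma SO_mult:
  assumes "(A :: 'a :: comm_ring_1 mat) \<in> SO_set d" "B \<in> SO_set d"
  shows "A * B \<in> SO_set d"
proof -
  have A: "A \<in> carrier_mat d d" and B: "B \<in> carrier_mat d d" using assms unfolding SO_set_def by auto
  have AT: "transpose_mat A \<in> carrier_mat d d" and BT: "transpose_mat B \<in> carrier_mat d d" using A B by auto
  have AB: "A * B \<in> carrier_mat d d" using A B by auto
  have "transpose_mat (A * B) * (A * B) = (transpose_mat B * transpose_mat A) * (A * B)"
    using transpose_mult[OF A B] by simp
  also have "\<dots> = transpose_mat B * (transpose_mat A * (A * B))"
    by (rule assoc_mult_mat[OF BT AT AB])
  also have "transpose_mat A * (A * B) = (transpose_mat A * A) * B"
    by (rule assoc_mult_mat[symmetric, OF AT A B])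
  also have "transpose_mat A * A = 1\<^sub>m d" using assms(1) unfolding SO_set_def by auto
  also have "1\<^sub>m d * B = B" using B by simp
  also have "transpose_mat B * B = 1\<^sub>m d" using assms(2) unfolding SO_set_def by auto
  finally show ?thesis using assms A B det_mult[OF A B] unfolding SO_set_def by auto
qed

lemma SO_right_inv:
  assumes "(A :: 'a :: field mat) \<in> SO_set d"
  shows "A * transpose_mat A = 1\<^sub>m d"
  using assms mat_mult_left_right_inverse[of "transpose_mat A" d A] unfolding SO_set_def by auto

lemma SO_transpose:
  assumes "(A :: 'a :: field mat) \<in> SO_set d"
  shows "transpose_mat A \<in> SO_set d"
  using assms SO_right_inv[OF assms] det_transpose[of A d] unfolding SO_set_def by auto

lemma SO_one: "1\<^sub>m d \<in> SO_set d"
  unfolding SO_set_def by auto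

lemma inv_mat_unique:
  assumes G: "(G :: 'a :: comm_ring_1 mat) \<in> carrier_mat d d" and H: "H \<in> carrier_mat d d"
    and GH: "G * H = 1\<^sub>m d" and HG: "H * G = 1\<^sub>m d"
  shows "inv_mat d G = H"
  unfolding inv_mat_def
proof (rule the_equality)
  show "H \<in> carrier_mat d d \<and> H * G = 1\<^sub>m d" using H HG by auto
next
  fix h assume h: "h \<in> carrier_mat d d \<and> h * G = 1\<^sub>m d"
  have "h = h * (G * H)" using GH h right_mult_one_mat[of h d d] by simp
  also have "\<dots> = (h * G) * H" by (rule assoc_mult_mat[symmetric, of h d d G d H d]) (use h G H in auto)
  also have "\<dots> = H" using h H by simp
  finally show "h = H" .
qed

lemma inv_of_int:
  assumes g: "g \<in> carrier_mat d d" and dg: "det g = 1"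
  defines "G \<equiv> map_mat (of_int :: int \<Rightarrow> 'a :: comm_ring_1) g"
  shows "inv_mat d G = map_mat of_int (adj_mat g)" "G * inv_mat d G = 1\<^sub>m d" "inv_mat d G * G = 1\<^sub>m d"
    "inv_mat d G \<in> carrier_mat d d" "G \<in> carrier_mat d d"
proof -
  have a: "adj_mat g \<in> carrier_mat d d" "g * adj_mat g = 1\<^sub>m d" "adj_mat g * g = 1\<^sub>m d"
    using adj_mat[OF g] dg by auto
  have 1: "G * map_mat of_int (adj_mat g) = 1\<^sub>m d"
    unfolding G_def of_int_hom.mat_hom_mult[OF g a(1), symmetric] a(2) by (rule of_int_hom.mat_hom_one)
  have 2: "map_mat of_int (adj_mat g) * G = 1\<^sub>m d"
    unfolding G_def of_int_hom.mat_hom_mult[OF a(1) g, symmetric] a(3) by (rule of_int_hom.mat_hom_one)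
  have Gc: "G \<in> carrier_mat d d" unfolding G_def using g by simp
  have e: "inv_mat d G = map_mat of_int (adj_mat g)"
    by (rule inv_mat_unique[OF Gc _ 1 2]) (use a in simp)
  show "inv_mat d G = map_mat of_int (adj_mat g)" by (rule e)
  show "G * inv_mat d G = 1\<^sub>m d" "inv_mat d G * G = 1\<^sub>m d" using 1 2 e by auto
  show "inv_mat d G \<in> carrier_mat d d" using e a by simp
  show "G \<in> carrier_mat d d" by (rule Gc)
qed



lemma idx_mv:
  assumes "A \<in> carrier_mat d d" "x \<in> carrier_vec d" "i < d"
  shows "(A *\<^sub>v x) $ i = (\<Sum>k<d. A $$ (i, k) * x $ k)"
  using assms by (auto simp: scalar_prod_def lessThan_atLeast0 intro!: sum.cong)

lemma gv_basic:
  assumes "valid_gv d v gv" and prim: "primitive_vec d v"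
  shows "gv \<in> carrier_mat d d" "det gv = 1" "\<And>j. j < d - 1 \<Longrightarrow> (\<Sum>i<d. v $ i * gv $$ (i, j)) = 0"
    "det (mat d d (\<lambda>(i, j). if j < d - 1 then gv $$ (i, j) else v $ i)) > 0"
proof -
  show g: "gv \<in> carrier_mat d d" "det gv = 1" using assms unfolding valid_gv_def by auto
  show "det (mat d d (\<lambda>(i, j). if j < d - 1 then gv $$ (i, j) else v $ i)) > 0" using assms unfolding valid_gv_def by auto
  fix j assume j: "j < d - 1"
  have "col gv j \<bullet> v = 0" using assms j unfolding valid_gv_def Lambda_def by auto
  moreover have "col gv j \<bullet> v = (\<Sum>i<d. v $ i * gv $$ (i, j))" using g j prim unfolding primitive_vec_def
    by (auto simp: scalar_prod_def lessThan_atLeast0 intro!: sum.cong)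
  ultimately show "(\<Sum>i<d. v $ i * gv $$ (i, j)) = 0" by simp
qed

lemma prim_nonzero:
  assumes "primitive_vec d v" shows "\<exists>i<d. v $ i \<noteq> 0"
proof (rule ccontr)
  assume "\<not> ?thesis"
  hence "\<forall>i<d. (2::int) dvd v $ i" by auto
  hence "is_unit (2::int)" using assms unfolding primitive_vec_def by blast
  thus False by simp
qed

lemma vtG:
  assumes d: "2 \<le> d" and prim: "primitive_vec d v" and gvv: "valid_gv d v gv"
  shows "\<And>j. j < d \<Longrightarrow> (\<Sum>i<d. v $ i * gv $$ (i, j)) = (if j = d - 1 then 1 else 0)"
proof -
  note g = gv_basic[OF gvv prim]
  define A where "A = adj_mat gv"
  have A: "A \<in> carrier_mat d d" "gv * A = 1\<^sub>m d" "A * gv = 1\<^sub>m d" using adj_mat[OF g(1)] g(2) unfolding A_def by auto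
  define w where "w j = (\<Sum>i<d. v $ i * gv $$ (i, j))" for j
  define t where "t = w (d - 1)"
  have vi: "v $ i = t * A $$ (d - 1, i)" if i: "i < d" for i
  proof -
    have "(\<Sum>j<d. w j * A $$ (j, i)) = (\<Sum>j<d. \<Sum>k<d. v $ k * (gv $$ (k, j) * A $$ (j, i)))"
      unfolding w_def by (simp add: sum_distrib_right mult.assoc)
    also have "\<dots> = (\<Sum>k<d. v $ k * (\<Sum>j<d. gv $$ (k, j) * A $$ (j, i)))"
      by (subst sum.swap) (simp add: sum_distrib_left)
    also have "\<dots> = (\<Sum>k<d. v $ k * (gv * A) $$ (k, i))"
      using idx_mult[OF g(1) A(1) _ i] by simp
    also have "\<dots> = (\<Sum>k<d. if k = i then v $ k else 0)"
      using A(2) i by (intro sum.cong) auto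
    also have "\<dots> = v $ i" using i by (simp add: sum.delta')
    finally have 1: "v $ i = (\<Sum>j<d. w j * A $$ (j, i))" by simp
    have "(\<Sum>j<d. w j * A $$ (j, i)) = (\<Sum>j<d-1. w j * A $$ (j, i)) + w (d - 1) * A $$ (d - 1, i)"
      by (rule sum_lessThan_split_last) (use d in auto)
    also have "(\<Sum>j<d-1. w j * A $$ (j, i)) = 0" using g(3) unfolding w_def by simp
    finally show ?thesis using 1 unfolding t_def by simp
  qed
  have "is_unit t"
    using prim unfolding primitive_vec_def using vi by (metis dvd_triv_left)
  hence t1: "t = 1 \<or> t = -1" by auto
  define y where "y = (\<Sum>i<d. A $$ (d - 1, i) * v $ i)"
  have vv: "(\<Sum>i<d. v $ i * v $ i) = t * y"
    unfolding y_def sum_distrib_left using vi by (intro sum.cong) auto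
  obtain i0 where i0: "i0 < d" "v $ i0 \<noteq> 0" using prim_nonzero[OF prim] by auto
  have "(\<Sum>i<d. v $ i * v $ i) > 0"
  proof -
    have "(\<Sum>i<d. v $ i * v $ i) \<ge> v $ i0 * v $ i0"
      using i0 by (intro member_le_sum) auto
    moreover have "v $ i0 * v $ i0 > 0" using i0 by (auto simp: zero_less_mult_iff linorder_neq_iff)
    ultimately show ?thesis by linarith
  qed
  hence ty: "t * y > 0" using vv by simp
  define D where "D = mat d d (\<lambda>(i, j). if j < d - 1 then (if i = j then 1 else 0) else (\<Sum>l<d. A $$ (i, l) * v $ l))"
  have Dc: "D \<in> carrier_mat d d" unfolding D_def by simp
  have ND: "mat d d (\<lambda>(i, j). if j < d - 1 then gv $$ (i, j) else v $ i) = gv * D"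
  proof (rule eq_matI)
    fix i j assume ij: "i < dim_row (gv * D)" "j < dim_col (gv * D)"
    hence i: "i < d" and j: "j < d" using g(1) Dc by auto
    have e: "(gv * D) $$ (i, j) = (\<Sum>k<d. gv $$ (i, k) * D $$ (k, j))" by (rule idx_mult[OF g(1) Dc i j])
    show "mat d d (\<lambda>(i, j). if j < d - 1 then gv $$ (i, j) else v $ i) $$ (i, j) = (gv * D) $$ (i, j)"
    proof (cases "j < d - 1")
      case True
      have "(\<Sum>k<d. gv $$ (i, k) * D $$ (k, j)) = (\<Sum>k<d. if k = j then gv $$ (i, k) else 0)"
        unfolding D_def using True by (intro sum.cong) auto
      also have "\<dots> = gv $$ (i, j)" using j by (simp add: sum.delta')
      finally show ?thesis using e True i j by simp
    next
      case False
      have "(\<Sum>k<d. gv $$ (i, k) * D $$ (k, j)) = (\<Sum>k<d. gv $$ (i, k) * (\<Sum>l<d. A $$ (k, l) * v $ l))"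
        unfolding D_def using False j by (intro sum.cong) auto
      also have "\<dots> = (\<Sum>l<d. (\<Sum>k<d. gv $$ (i, k) * A $$ (k, l)) * v $ l)"
        by (simp add: sum_distrib_left sum_distrib_right mult.assoc) (rule sum.swap)
      also have "\<dots> = (\<Sum>l<d. (gv * A) $$ (i, l) * v $ l)"
        using idx_mult[OF g(1) A(1) i] by simp
      also have "\<dots> = (\<Sum>l<d. if l = i then v $ l else 0)"
        using A(2) i by (intro sum.cong) auto
      also have "\<dots> = v $ i" using i by (simp add: sum.delta')
      finally show ?thesis using e False i j by simp
    qed
  qed (use g(1) Dc in auto)
  have "det D = y"
  proof -
    have ut: "upper_triangular D" unfolding D_def upper_triangular_def by auto
    have "det D = (\<Prod>i = 0 ..< d. D $$ (i, i))"
      using det_upper_triangular[OF ut Dc] prod_list_diag_prod[of D] Dc by simp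
    also have "\<dots> = (\<Prod>i<d. D $$ (i, i))" by (simp add: lessThan_atLeast0)
    also have "\<dots> = (\<Prod>i<d-1. D $$ (i, i)) * D $$ (d - 1, d - 1)"
    proof -
      obtain e where "d = Suc e" using d by (cases d) auto
      thus ?thesis by simp
    qed
    also have "(\<Prod>i<d-1. D $$ (i, i)) = 1" unfolding D_def by (intro prod.neutral) auto
    also have "D $$ (d - 1, d - 1) = y" unfolding D_def y_def using d by auto
    finally show ?thesis by simp
  qed
  hence "y > 0" using g(4) ND det_mult[OF g(1) Dc] g(2) by simp
  hence tpos: "t > 0" using ty by (simp add: zero_less_mult_iff)
  hence t: "t = 1" using t1 by auto
  fix j assume j: "j < d"
  show "(\<Sum>i<d. v $ i * gv $$ (i, j)) = (if j = d - 1 then 1 else 0)"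
  proof (cases "j = d - 1")
    case True thus ?thesis using t unfolding t_def w_def by simp
  next
    case False hence "j < d - 1" using j by linarith
    thus ?thesis using g(3) False by simp
  qed
qed



lemma vnorm_pos:
  assumes prim: "primitive_vec d v" shows "vnorm v > 0"
proof -
  obtain i0 where i0: "i0 < d" "v $ i0 \<noteq> 0" using prim_nonzero[OF prim] by auto
  have dv: "dim_vec v = d" using prim unfolding primitive_vec_def by auto
  have "v \<bullet> v = (\<Sum>i<d. v $ i * v $ i)" using dv by (simp add: scalar_prod_def lessThan_atLeast0)
  also have "\<dots> \<ge> v $ i0 * v $ i0" using i0 by (intro member_le_sum) auto
  finally have "v \<bullet> v \<ge> v $ i0 * v $ i0" .
  moreover have "v $ i0 * v $ i0 > 0" using i0 by (auto simp: zero_less_mult_iff linorder_neq_iff)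
  ultimately have "v \<bullet> v > 0" by linarith
  thus ?thesis unfolding vnorm_def by simp
qed

lemma kv_row:
  assumes d: "2 \<le> d" and prim: "primitive_vec d v" and kvv: "valid_kv d v kv" and i: "i < d"
  shows "vnorm v * kv $$ (d - 1, i) = real_of_int (v $ i)"
proof -
  have kv: "kv \<in> carrier_mat d d" "transpose_mat kv * kv = 1\<^sub>m d" using kvv unfolding valid_kv_def SO_set_def by auto
  have vc: "v \<in> carrier_vec d" using prim unfolding primitive_vec_def by auto
  define x where "x = map_vec real_of_int v"
  have xc: "x \<in> carrier_vec d" using vc unfolding x_def by auto
  have kx: "kv *\<^sub>v x = vnorm v \<cdot>\<^sub>v e_last d" using kvv unfolding valid_kv_def x_def by auto
  have "x = (transpose_mat kv * kv) *\<^sub>v x" using kv(2) xc by simp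
  also have "\<dots> = transpose_mat kv *\<^sub>v (kv *\<^sub>v x)" using kv(1) xc by (intro assoc_mult_mat_vec) auto
  also have "\<dots> = transpose_mat kv *\<^sub>v (vnorm v \<cdot>\<^sub>v e_last d)" using kx by simp
  finally have "x $ i = (transpose_mat kv *\<^sub>v (vnorm v \<cdot>\<^sub>v e_last d)) $ i" by simp
  also have "\<dots> = (\<Sum>k<d. transpose_mat kv $$ (i, k) * (vnorm v \<cdot>\<^sub>v e_last d) $ k)"
    by (rule idx_mv) (use kv i in \<open>auto simp: e_last_def\<close>)
  also have "\<dots> = (\<Sum>k<d. if k = d - 1 then vnorm v * kv $$ (d - 1, i) else 0)"
    using kv i d by (intro sum.cong) (auto simp: e_last_def)
  also have "\<dots> = vnorm v * kv $$ (d - 1, i)" using d by (simp add: sum.delta')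
  finally show ?thesis unfolding x_def using vc i by simp
qed

lemma a_mat_carrier: "a_mat d v \<in> carrier_mat d d"
  unfolding a_mat_def by simp

lemma diag_mult_left:
  assumes "A \<in> carrier_mat d d" "(B :: 'a :: comm_ring_1 mat) \<in> carrier_mat d d" "i < d" "j < d"
    "\<And>i l. i < d \<Longrightarrow> l < d \<Longrightarrow> A $$ (i, l) = (if i = l then \<alpha> i else 0)"
  shows "(A * B) $$ (i, j) = \<alpha> i * B $$ (i, j)"
proof -
  have "(A * B) $$ (i, j) = (\<Sum>l<d. A $$ (i, l) * B $$ (l, j))" by (rule idx_mult) (use assms in auto)
  also have "\<dots> = (\<Sum>l<d. if l = i then \<alpha> i * B $$ (l, j) else 0)" using assms by (intro sum.cong) auto
  also have "\<dots> = \<alpha> i * B $$ (i, j)" using assms by (simp add: sum.delta')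
  finally show ?thesis .
qed

lemma diag_mult_right:
  assumes "(B :: 'a :: comm_ring_1 mat) \<in> carrier_mat d d" "A \<in> carrier_mat d d" "i < d" "j < d"
    "\<And>i l. i < d \<Longrightarrow> l < d \<Longrightarrow> A $$ (i, l) = (if i = l then \<alpha> i else 0)"
  shows "(B * A) $$ (i, j) = B $$ (i, j) * \<alpha> j"
proof -
  have "(B * A) $$ (i, j) = (\<Sum>l<d. B $$ (i, l) * A $$ (l, j))" by (rule idx_mult) (use assms in auto)
  also have "\<dots> = (\<Sum>l<d. if l = j then B $$ (i, l) * \<alpha> j else 0)" using assms by (intro sum.cong) auto
  also have "\<dots> = B $$ (i, j) * \<alpha> j" using assms by (simp add: sum.delta')
  finally show ?thesis .
qed

definition a_diag :: "nat \<Rightarrow> int vec \<Rightarrow> nat \<Rightarrow> real" where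
  "a_diag d v i = (if i = d - 1 then vnorm v else vnorm v powr (- 1 / real (d - 1)))"

lemma a_mat_idx: "i < d \<Longrightarrow> l < d \<Longrightarrow> a_mat d v $$ (i, l) = (if i = l then a_diag d v i else 0)"
  unfolding a_mat_def a_diag_def by auto

lemma K_props:
  assumes k: "k \<in> K_set d" and d: "1 \<le> d"
  shows "lastrow_e d k" "\<And>i. i < d \<Longrightarrow> k $$ (i, d - 1) = (if i = d - 1 then 1 else 0)"
    "k \<in> carrier_mat d d"
proof -
  have kc: "k \<in> carrier_mat d d" and kk: "transpose_mat k * k = 1\<^sub>m d" and ke: "k *\<^sub>v e_last d = e_last d"
    using k unfolding K_set_def SO_set_def by auto
  show "k \<in> carrier_mat d d" by (rule kc)
  have ec: "(e_last d :: real vec) \<in> carrier_vec d" unfolding e_last_def by simp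
  show col: "k $$ (i, d - 1) = (if i = d - 1 then 1 else 0)" if i: "i < d" for i
  proof -
    have "(k *\<^sub>v e_last d) $ i = (\<Sum>l<d. k $$ (i, l) * e_last d $ l)" by (rule idx_mv[OF kc ec i])
    also have "\<dots> = (\<Sum>l<d. if l = d - 1 then k $$ (i, l) else 0)" using d by (intro sum.cong) (auto simp: e_last_def)
    also have "\<dots> = k $$ (i, d - 1)" using d by (simp add: sum.delta')
    finally show ?thesis using ke i d by (simp add: e_last_def)
  qed
  have "transpose_mat k *\<^sub>v e_last d = transpose_mat k *\<^sub>v (k *\<^sub>v e_last d)" using ke by simp
  also have "\<dots> = (transpose_mat k * k) *\<^sub>v e_last d" using kc ec by (intro assoc_mult_mat_vec[symmetric]) auto
  also have "\<dots> = e_last d" using kk ec by simp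
  finally have kte: "transpose_mat k *\<^sub>v e_last d = e_last d" .
  show "lastrow_e d k" unfolding lastrow_e_def
  proof (intro allI impI)
    fix j assume j: "j < d"
    have "(transpose_mat k *\<^sub>v e_last d) $ j = (\<Sum>l<d. transpose_mat k $$ (j, l) * e_last d $ l)"
      by (rule idx_mv) (use kc ec j in auto)
    also have "\<dots> = (\<Sum>l<d. if l = d - 1 then k $$ (d - 1, j) else 0)" using d j kc by (intro sum.cong) (auto simp: e_last_def)
    also have "\<dots> = k $$ (d - 1, j)" using d by (simp add: sum.delta')
    finally show "k $$ (d - 1, j) = (if j = d - 1 then 1 else 0)" using kte j d by (simp add: e_last_def)
  qed
qed

lemma a_comm_K:
  assumes k: "k \<in> K_set d" and d: "1 \<le> d"
  shows "a_mat d v * k = k * a_mat d v"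
proof -
  note K = K_props[OF k d]
  show ?thesis
  proof (rule eq_matI)
    fix i j assume ij: "i < dim_row (k * a_mat d v)" "j < dim_col (k * a_mat d v)"
    hence i: "i < d" and j: "j < d" using K(3) a_mat_carrier[of d v] by auto
    have l: "(a_mat d v * k) $$ (i, j) = a_diag d v i * k $$ (i, j)"
      by (rule diag_mult_left[OF a_mat_carrier K(3) i j a_mat_idx])
    have r: "(k * a_mat d v) $$ (i, j) = k $$ (i, j) * a_diag d v j"
      by (rule diag_mult_right[OF K(3) a_mat_carrier i j a_mat_idx])
    show "(a_mat d v * k) $$ (i, j) = (k * a_mat d v) $$ (i, j)"
    proof (cases "i = d - 1 \<longleftrightarrow> j = d - 1")
      case True
      hence "a_diag d v i = a_diag d v j" unfolding a_diag_def by auto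
      thus ?thesis using l r by simp
    next
      case False
      hence "k $$ (i, j) = 0" using K(1) K(2)[OF i] j unfolding lastrow_e_def by auto
      thus ?thesis using l r by simp
    qed
  qed (use K(3) a_mat_carrier[of d v] in auto)
qed



lemma sq_mult: "A \<in> carrier_mat n n \<Longrightarrow> B \<in> carrier_mat n n \<Longrightarrow> A * B \<in> carrier_mat n n" by auto

lemma det_a_mat:
  assumes d: "2 \<le> d" and vp: "vnorm v > 0"
  shows "det (a_mat d v) = 1"
proof -
  have c: "a_mat d v \<in> carrier_mat d d" by (rule a_mat_carrier)
  have ut: "upper_triangular (a_mat d v)" unfolding a_mat_def upper_triangular_def by auto
  have "det (a_mat d v) = (\<Prod>i = 0 ..< d. a_mat d v $$ (i, i))"
    using det_upper_triangular[OF ut c] prod_list_diag_prod[of "a_mat d v"] c by simp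
  also have "\<dots> = (\<Prod>i<d. a_mat d v $$ (i, i))" by (simp add: lessThan_atLeast0)
  also have "\<dots> = (\<Prod>i<d-1. a_mat d v $$ (i, i)) * a_mat d v $$ (d - 1, d - 1)"
  proof -
    obtain e where "d = Suc e" using d by (cases d) auto
    thus ?thesis by simp
  qed
  also have "(\<Prod>i<d-1. a_mat d v $$ (i, i)) = (\<Prod>i<d-1. vnorm v powr (- 1 / real (d - 1)))"
    unfolding a_mat_def by (intro prod.cong) auto
  also have "\<dots> = (vnorm v powr (- 1 / real (d - 1))) ^ (d - 1)" by (simp only: prod_constant card_lessThan)
  also have "\<dots> = vnorm v powr (- 1 / real (d - 1) * real (d - 1))"
    using vp by (simp add: powr_realpow[symmetric] powr_powr)
  also have "\<dots> = vnorm v powr (-1)" using d by simp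
  also have "a_mat d v $$ (d - 1, d - 1) = vnorm v" unfolding a_mat_def using d by simp
  finally show ?thesis using vp by (simp add: powr_neg_one)
qed

lemma A0_lastrow:
  assumes d: "2 \<le> d" and prim: "primitive_vec d v" and gvv: "valid_gv d v gv" and kvv: "valid_kv d v kv"
  shows "lastrow_e d (a_mat d v * kv * map_mat real_of_int gv)"
  unfolding lastrow_e_def
proof (intro allI impI)
  fix j assume j: "j < d"
  have kc: "kv \<in> carrier_mat d d" using kvv unfolding valid_kv_def SO_set_def by auto
  have gc: "gv \<in> carrier_mat d d" using gv_basic[OF gvv prim] by auto
  have GR: "map_mat real_of_int gv \<in> carrier_mat d d" using gc by simp
  have d1: "d - 1 < d" using d by auto
  have "(a_mat d v * kv * map_mat real_of_int gv) = a_mat d v * (kv * map_mat real_of_int gv)"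
    using a_mat_carrier kc GR by (rule assoc_mult_mat)
  hence "(a_mat d v * kv * map_mat real_of_int gv) $$ (d - 1, j) = a_diag d v (d - 1) * (kv * map_mat real_of_int gv) $$ (d - 1, j)"
    using diag_mult_left[OF a_mat_carrier sq_mult[OF kc GR] d1 j a_mat_idx] by simp
  also have "a_diag d v (d - 1) = vnorm v" unfolding a_diag_def by simp
  also have "(kv * map_mat real_of_int gv) $$ (d - 1, j) = (\<Sum>i<d. kv $$ (d - 1, i) * real_of_int (gv $$ (i, j)))"
    using idx_mult[OF kc GR d1 j] gc j by (simp)
  also have "vnorm v * \<dots> = (\<Sum>i<d. (vnorm v * kv $$ (d - 1, i)) * real_of_int (gv $$ (i, j)))"
    by (simp add: sum_distrib_left mult.assoc)
  also have "\<dots> = (\<Sum>i<d. real_of_int (v $ i * gv $$ (i, j)))"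
    using kv_row[OF d prim kvv] by (intro sum.cong) auto
  also have "\<dots> = real_of_int (\<Sum>i<d. v $ i * gv $$ (i, j))" by simp
  also have "\<dots> = (if j = d - 1 then 1 else 0)" using vtG[OF d prim gvv j] by simp
  finally show "(a_mat d v * kv * map_mat real_of_int gv) $$ (d - 1, j) = (if j = d - 1 then 1 else 0)" .
qed

lemma A0_ASL:
  assumes d: "2 \<le> d" and prim: "primitive_vec d v" and gvv: "valid_gv d v gv" and kvv: "valid_kv d v kv"
  shows "a_mat d v * kv * map_mat real_of_int gv \<in> ASL_set d"
proof -
  have kc: "kv \<in> carrier_mat d d" "det kv = 1" using kvv unfolding valid_kv_def SO_set_def by auto
  have gc: "gv \<in> carrier_mat d d" "det gv = 1" using gv_basic[OF gvv prim] by auto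
  have GR: "map_mat real_of_int gv \<in> carrier_mat d d" using gc by simp
  have "det (a_mat d v * kv * map_mat real_of_int gv) = det (a_mat d v) * det kv * det (map_mat real_of_int gv)"
    using det_mult[OF sq_mult[OF a_mat_carrier kc(1)] GR] det_mult[OF a_mat_carrier kc(1)] by simp
  also have "\<dots> = 1" using det_a_mat[OF d vnorm_pos[OF prim]] kc gc(2) of_int_hom.hom_det[of gv] by simp
  moreover have "a_mat d v * kv * map_mat real_of_int gv \<in> carrier_mat d d"
    using a_mat_carrier kc GR by (meson sq_mult)
  moreover have d1: "1 \<le> d" using d by auto
  ultimately show ?thesis unfolding ASL_iff[OF d1] using A0_lastrow[OF assms] by auto
qed

lemma kvT_e:
  assumes d: "2 \<le> d" and prim: "primitive_vec d v" and kvv: "valid_kv d v kv"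
  shows "transpose_mat kv *\<^sub>v e_last d = (1 / vnorm v) \<cdot>\<^sub>v map_vec real_of_int v"
proof -
  have kc: "kv \<in> carrier_mat d d" using kvv unfolding valid_kv_def SO_set_def by auto
  have vc: "v \<in> carrier_vec d" using prim unfolding primitive_vec_def by auto
  have vp: "vnorm v > 0" by (rule vnorm_pos[OF prim])
  show ?thesis
  proof (rule eq_vecI)
    fix i assume "i < dim_vec ((1 / vnorm v) \<cdot>\<^sub>v map_vec real_of_int v)"
    hence i: "i < d" using vc by auto
    have "(transpose_mat kv *\<^sub>v e_last d) $ i = (\<Sum>k<d. transpose_mat kv $$ (i, k) * e_last d $ k)"
      by (rule idx_mv) (use kc i in \<open>auto simp: e_last_def\<close>)
    also have "\<dots> = (\<Sum>k<d. if k = d - 1 then kv $$ (d - 1, i) else 0)"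
      using kc i d by (intro sum.cong) (auto simp: e_last_def)
    also have "\<dots> = kv $$ (d - 1, i)" using d by (simp add: sum.delta')
    also have "\<dots> = real_of_int (v $ i) / vnorm v" using kv_row[OF d prim kvv i] vp by (simp add: field_simps)
    finally show "(transpose_mat kv *\<^sub>v e_last d) $ i = ((1 / vnorm v) \<cdot>\<^sub>v map_vec real_of_int v) $ i"
      using vc i by simp
  qed (use kc vc in \<open>auto simp: e_last_def\<close>)
qed

lemma conjK:
  assumes d: "2 \<le> d" and prim: "primitive_vec d v" and kvv: "valid_kv d v kv"
    and h: "h \<in> SO_set d" and hv: "h *\<^sub>v map_vec real_of_int v = map_vec real_of_int v"
  shows "kv * h * transpose_mat kv \<in> K_set d"
proof -
  have kso: "kv \<in> SO_set d" using kvv unfolding valid_kv_def by auto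
  have kc: "kv \<in> carrier_mat d d" using kso unfolding SO_set_def by auto
  have hc: "h \<in> carrier_mat d d" using h unfolding SO_set_def by auto
  have vc: "map_vec real_of_int v \<in> carrier_vec d" using prim unfolding primitive_vec_def by auto
  have ec: "(e_last d :: real vec) \<in> carrier_vec d" unfolding e_last_def by simp
  have vp: "vnorm v > 0" by (rule vnorm_pos[OF prim])
  have so: "kv * h * transpose_mat kv \<in> SO_set d"
    by (intro SO_mult SO_transpose kso h)
  have ktc: "transpose_mat kv \<in> carrier_mat d d" using kc by simp
  have "(kv * h * transpose_mat kv) *\<^sub>v e_last d = (kv * h) *\<^sub>v (transpose_mat kv *\<^sub>v e_last d)"
    by (rule assoc_mult_mat_vec[OF sq_mult[OF kc hc] ktc ec])
  also have "\<dots> = kv *\<^sub>v (h *\<^sub>v (transpose_mat kv *\<^sub>v e_last d))"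
    by (rule assoc_mult_mat_vec[OF kc hc]) (use ktc ec in auto)
  also have "\<dots> = kv *\<^sub>v (h *\<^sub>v ((1 / vnorm v) \<cdot>\<^sub>v map_vec real_of_int v))" using kvT_e[OF d prim kvv] by simp
  also have "\<dots> = (1 / vnorm v) \<cdot>\<^sub>v (kv *\<^sub>v (h *\<^sub>v map_vec real_of_int v))"
    using mult_mat_vec[OF hc vc] mult_mat_vec[OF kc, of "h *\<^sub>v map_vec real_of_int v"] hc vc by simp
  also have "\<dots> = (1 / vnorm v) \<cdot>\<^sub>v (vnorm v \<cdot>\<^sub>v e_last d)" using hv kvv unfolding valid_kv_def by simp
  also have "\<dots> = e_last d" using vp by (simp add: smult_smult_assoc)
  finally show ?thesis using so unfolding K_set_def by auto
qed

lemma ASL_K_mult: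
  assumes d: "1 \<le> d" and k: "k \<in> K_set d" and M: "M \<in> ASL_set d"
  shows "k * M \<in> ASL_set d"
proof -
  note K = K_props[OF k d]
  have Mc: "M \<in> carrier_mat d d" "lastrow_e d M" "det M = 1" using M unfolding ASL_iff[OF d] by auto
  have "det k = 1" using k unfolding K_set_def SO_set_def by auto
  thus ?thesis unfolding ASL_iff[OF d] using K Mc lastrow_mult[OF K(3) Mc(1) K(1) Mc(2)] det_mult[OF K(3) Mc(1)] by auto
qed

lemma conj_R_eq:
  assumes d: "2 \<le> d" and prim: "primitive_vec d v" and gvv: "valid_gv d v gv" and kvv: "valid_kv d v kv"
    and h: "h \<in> SO_set d" and hv: "h *\<^sub>v map_vec real_of_int v = map_vec real_of_int v"
  shows "a_mat d v * kv * map_mat real_of_int gv * conj_R d gv h = (kv * h * transpose_mat kv) * (a_mat d v * kv * map_mat real_of_int gv)"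
    and "a_mat d v * kv * map_mat real_of_int gv * conj_R d gv h = a_mat d v * (kv * h * map_mat real_of_int gv)"
proof -
  have kso: "kv \<in> SO_set d" using kvv unfolding valid_kv_def by auto
  have kc: "kv \<in> carrier_mat d d" using kso unfolding SO_set_def by auto
  have hc: "h \<in> carrier_mat d d" using h unfolding SO_set_def by auto
  have ktk: "transpose_mat kv * kv = 1\<^sub>m d" using kso unfolding SO_set_def by auto
  have gc: "gv \<in> carrier_mat d d" "det gv = 1" using gv_basic[OF gvv prim] by auto
  note I = inv_of_int[OF gc, where 'a = real]
  define G where "G = map_mat real_of_int gv"
  define Gi where "Gi = inv_mat d G"
  have Gc: "G \<in> carrier_mat d d" "Gi \<in> carrier_mat d d" "G * Gi = 1\<^sub>m d" using I unfolding G_def Gi_def by auto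
  have ac: "a_mat d v \<in> carrier_mat d d" by (rule a_mat_carrier)
  have ktc: "transpose_mat kv \<in> carrier_mat d d" using kc by simp
  have as: "\<And>A B C. A \<in> carrier_mat d d \<Longrightarrow> B \<in> carrier_mat d d \<Longrightarrow> C \<in> carrier_mat d d \<Longrightarrow> (A*B)*C = A*(B*(C::real mat))" by auto
  have can1: "\<And>X. X \<in> carrier_mat d d \<Longrightarrow> G * (Gi * X) = X" using as Gc by (metis left_mult_one_mat)
  have can2: "\<And>X. X \<in> carrier_mat d d \<Longrightarrow> transpose_mat kv * (kv * X) = X" using as ktk kc ktc by (metis left_mult_one_mat)
  have e2: "a_mat d v * kv * G * conj_R d gv h = a_mat d v * (kv * h * G)"
    unfolding conj_R_def G_def[symmetric] Gi_def[symmetric]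
    using ac kc Gc hc by (simp add: as sq_mult can1)
  thus "a_mat d v * kv * map_mat real_of_int gv * conj_R d gv h = a_mat d v * (kv * h * map_mat real_of_int gv)"
    unfolding G_def .
  have kK: "kv * h * transpose_mat kv \<in> K_set d" by (rule conjK[OF d prim kvv h hv])
  have "(kv * h * transpose_mat kv) * (a_mat d v * kv * G) = ((kv * h * transpose_mat kv) * a_mat d v) * (kv * G)"
    using ac kc Gc hc ktc by (simp add: as sq_mult)
  also have "(kv * h * transpose_mat kv) * a_mat d v = a_mat d v * (kv * h * transpose_mat kv)"
    using a_comm_K[OF kK] d by simp
  also have "a_mat d v * (kv * h * transpose_mat kv) * (kv * G) = a_mat d v * (kv * h * G)"
    using ac kc Gc hc ktc by (simp add: as sq_mult can2)
  finally show "a_mat d v * kv * map_mat real_of_int gv * conj_R d gv h = (kv * h * transpose_mat kv) * (a_mat d v * kv * map_mat real_of_int gv)"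
    using e2 unfolding G_def by simp
qed



context fixes p :: nat assumes p: "prime p"
begin

lemma qeq_refl: "qp_mat_eq p d X X"
  unfolding qp_mat_eq_def using null_zero[OF p] by simp

lemma qeq_eq: "(\<And>n. X n = Y n) \<Longrightarrow> qp_mat_eq p d X Y"
  using qeq_refl by (metis ext)

lemma qeq_sym: "qp_mat_eq p d X Y \<Longrightarrow> qp_mat_eq p d Y X"
  unfolding qp_mat_eq_def using null_uminus[OF p] by fastforce

lemma qeq_trans: "qp_mat_eq p d X Y \<Longrightarrow> qp_mat_eq p d Y Z \<Longrightarrow> qp_mat_eq p d X Z"
  unfolding qp_mat_eq_def
proof (intro allI impI)
  fix i j assume a: "\<forall>i<d. \<forall>j<d. padic_null p (\<lambda>n. X n $$ (i, j) - Y n $$ (i, j))"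
    "\<forall>i<d. \<forall>j<d. padic_null p (\<lambda>n. Y n $$ (i, j) - Z n $$ (i, j))" and ij: "i < d" "j < d"
  have "padic_null p (\<lambda>n. (X n $$ (i, j) - Y n $$ (i, j)) + (Y n $$ (i, j) - Z n $$ (i, j)))"
    using a ij by (intro null_add[OF p]) auto
  thus "padic_null p (\<lambda>n. X n $$ (i, j) - Z n $$ (i, j))" by simp
qed

lemma qeq_cong_left:
  assumes "mcar d X" "mcar d X'" "mcar d Y" "qp_mat_eq p d X X'" "mbdd p d Y"
  shows "qp_mat_eq p d (\<lambda>n. X n * Y n) (\<lambda>n. X' n * Y n)"
  unfolding qp_mat_eq_def
proof (intro allI impI)
  fix i j assume ij: "i < d" "j < d"
  have "padic_null p (\<lambda>n. \<Sum>k<d. (X n $$ (i, k) - X' n $$ (i, k)) * Y n $$ (k, j))"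
    using assms(4,5) ij unfolding qp_mat_eq_def mbdd_def
    by (intro null_sum[OF p]) (auto intro!: null_mult_bdd[OF p])
  moreover have "(\<Sum>k<d. (X n $$ (i, k) - X' n $$ (i, k)) * Y n $$ (k, j)) = (X n * Y n) $$ (i, j) - (X' n * Y n) $$ (i, j)" for n
    using idx_mult[of "X n" d "Y n" i j] idx_mult[of "X' n" d "Y n" i j] assms(1-3) ij unfolding mcar_def
    by (simp add: sum_subtractf left_diff_distrib)
  ultimately show "padic_null p (\<lambda>n. (X n * Y n) $$ (i, j) - (X' n * Y n) $$ (i, j))" by simp
qed

lemma qeq_cong_right:
  assumes "mcar d X" "mcar d Y" "mcar d Y'" "mbdd p d X" "qp_mat_eq p d Y Y'"
  shows "qp_mat_eq p d (\<lambda>n. X n * Y n) (\<lambda>n. X n * Y' n)"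
  unfolding qp_mat_eq_def
proof (intro allI impI)
  fix i j assume ij: "i < d" "j < d"
  have "padic_null p (\<lambda>n. \<Sum>k<d. X n $$ (i, k) * (Y n $$ (k, j) - Y' n $$ (k, j)))"
    using assms(4,5) ij unfolding qp_mat_eq_def mbdd_def
    by (intro null_sum[OF p]) (auto intro!: bdd_mult_null[OF p])
  moreover have "(\<Sum>k<d. X n $$ (i, k) * (Y n $$ (k, j) - Y' n $$ (k, j))) = (X n * Y n) $$ (i, j) - (X n * Y' n) $$ (i, j)" for n
    using idx_mult[of "X n" d "Y n" i j] idx_mult[of "X n" d "Y' n" i j] assms(1-3) ij unfolding mcar_def
    by (simp add: sum_subtractf right_diff_distrib)
  ultimately show "padic_null p (\<lambda>n. (X n * Y n) $$ (i, j) - (X n * Y' n) $$ (i, j))" by simp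
qed

lemma qeq_transpose:
  assumes "mcar d X" "mcar d Y" "qp_mat_eq p d X Y"
  shows "qp_mat_eq p d (\<lambda>n. transpose_mat (X n)) (\<lambda>n. transpose_mat (Y n))"
  using assms unfolding qp_mat_eq_def by (simp add: mcarD)

lemma mbdd_transpose:
  assumes "mcar d X" "mbdd p d X"
  shows "mbdd p d (\<lambda>n. transpose_mat (X n))"
  using assms unfolding mbdd_def by (simp add: mcarD)

lemma qeq_mbdd:
  assumes "qp_mat_eq p d X Y" "mbdd p d Y"
  shows "mbdd p d X"
  unfolding mbdd_def
proof (intro allI impI)
  fix i j assume ij: "i < d" "j < d"
  have "ebdd p (\<lambda>n. (X n $$ (i, j) - Y n $$ (i, j)) + Y n $$ (i, j))"
  proof (rule ebdd_add[OF p])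
    show "ebdd p (\<lambda>n. X n $$ (i, j) - Y n $$ (i, j))" using assms ij unfolding qp_mat_eq_def by (intro null_ebdd[OF p]) auto
    show "ebdd p (\<lambda>n. Y n $$ (i, j))" using assms ij unfolding mbdd_def by auto
  qed
  thus "ebdd p (\<lambda>n. X n $$ (i, j))" by simp
qed

end


definition Vm :: "nat \<Rightarrow> int vec \<Rightarrow> rat mat" where
  "Vm d v = mat d d (\<lambda>(i, j). rat_of_int (v $ i))"

lemma Vm_carrier: "Vm d v \<in> carrier_mat d d" unfolding Vm_def by simp

lemma Gi_row:
  assumes d: "2 \<le> d" and prim: "primitive_vec d v" and gvv: "valid_gv d v gv" and k: "k < d"
  shows "inv_mat d (map_mat rat_of_int gv) $$ (d - 1, k) = rat_of_int (v $ k)"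
proof -
  have gc: "gv \<in> carrier_mat d d" "det gv = 1" using gv_basic[OF gvv prim] by auto
  note I = inv_of_int[OF gc, where 'a = rat]
  define G where "G = map_mat rat_of_int gv"
  define Gi where "Gi = inv_mat d G"
  have Gc: "G \<in> carrier_mat d d" "Gi \<in> carrier_mat d d" "G * Gi = 1\<^sub>m d" using I unfolding G_def Gi_def by auto
  have "(\<Sum>j<d. (\<Sum>i<d. rat_of_int (v $ i) * G $$ (i, j)) * Gi $$ (j, k)) = (\<Sum>i<d. rat_of_int (v $ i) * (\<Sum>j<d. G $$ (i, j) * Gi $$ (j, k)))"
    by (simp add: sum_distrib_left sum_distrib_right mult.assoc) (rule sum.swap)
  also have "\<dots> = (\<Sum>i<d. rat_of_int (v $ i) * (G * Gi) $$ (i, k))"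
    using idx_mult[OF Gc(1,2) _ k] by simp
  also have "\<dots> = (\<Sum>i<d. if i = k then rat_of_int (v $ k) else 0)"
    using Gc(3) k by (intro sum.cong) auto
  also have "\<dots> = rat_of_int (v $ k)" using k by (simp add: sum.delta')
  finally have 1: "(\<Sum>j<d. (\<Sum>i<d. rat_of_int (v $ i) * G $$ (i, j)) * Gi $$ (j, k)) = rat_of_int (v $ k)" .
  have "(\<Sum>j<d. (\<Sum>i<d. rat_of_int (v $ i) * G $$ (i, j)) * Gi $$ (j, k)) = (\<Sum>j<d. (if j = d - 1 then Gi $$ (j, k) else 0))"
  proof (intro sum.cong refl)
    fix j assume j: "j \<in> {..<d}"
    have "(\<Sum>i<d. rat_of_int (v $ i) * G $$ (i, j)) = rat_of_int (\<Sum>i<d. v $ i * gv $$ (i, j))"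
      unfolding G_def using gc j by simp
    also have "\<dots> = (if j = d - 1 then 1 else 0)" using vtG[OF d prim gvv] j by simp
    finally show "(\<Sum>i<d. rat_of_int (v $ i) * G $$ (i, j)) * Gi $$ (j, k) = (if j = d - 1 then Gi $$ (j, k) else 0)" by simp
  qed
  also have "\<dots> = Gi $$ (d - 1, k)" using d by (simp add: sum.delta')
  finally show ?thesis using 1 unfolding Gi_def G_def by simp
qed

context fixes p :: nat assumes p: "prime p"
begin

lemmas qtrans[trans] = qeq_trans[OF p]

lemma HQp_V:
  assumes d: "1 \<le> d" and vc: "v \<in> carrier_vec d" and X: "X \<in> SO_Qp p d"
  shows "X \<in> H_Qp p d v \<longleftrightarrow> qp_mat_eq p d (\<lambda>n. X n * Vm d v) (\<lambda>n. Vm d v)"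
proof -
  have Xc: "mcar d X" using X unfolding SO_Qp_def qp_mat_def mcar_def by auto
  have e: "(X n * Vm d v) $$ (i, j) = (X n *\<^sub>v map_vec rat_of_int v) $ i" if ij: "i < d" "j < d" for n i j
  proof -
    have Xn: "X n \<in> carrier_mat d d" using Xc unfolding mcar_def by auto
    have "(X n * Vm d v) $$ (i, j) = (\<Sum>k<d. X n $$ (i, k) * Vm d v $$ (k, j))"
      by (rule idx_mult[OF Xn Vm_carrier ij])
    also have "\<dots> = (\<Sum>k<d. X n $$ (i, k) * map_vec rat_of_int v $ k)"
      using vc ij by (intro sum.cong) (auto simp: Vm_def)
    also have "\<dots> = (X n *\<^sub>v map_vec rat_of_int v) $ i"
      by (rule idx_mv[symmetric]) (use Xn vc ij in auto)
    finally show ?thesis .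
  qed
  have e2: "Vm d v $$ (i, j) = rat_of_int (v $ i)" if "i < d" "j < d" for i j
    using that unfolding Vm_def by simp
  show ?thesis
  proof
    assume "X \<in> H_Qp p d v"
    thus "qp_mat_eq p d (\<lambda>n. X n * Vm d v) (\<lambda>n. Vm d v)"
      unfolding H_Qp_def qp_mat_eq_def using e e2 by simp
  next
    assume a: "qp_mat_eq p d (\<lambda>n. X n * Vm d v) (\<lambda>n. Vm d v)"
    have "\<forall>i<d. padic_null p (\<lambda>n. (X n *\<^sub>v map_vec rat_of_int v) $ i - rat_of_int (v $ i))"
    proof (intro allI impI)
      fix i assume i: "i < d"
      have d0: "0 < d" using d by auto
      have "padic_null p (\<lambda>n. (X n * Vm d v) $$ (i, 0) - Vm d v $$ (i, 0))"
        using a i d0 unfolding qp_mat_eq_def by auto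
      moreover have "(X n * Vm d v) $$ (i, 0) - Vm d v $$ (i, 0) = (X n *\<^sub>v map_vec rat_of_int v) $ i - rat_of_int (v $ i)" for n
        using e[OF i d0] e2[OF i d0] by simp
      ultimately show "padic_null p (\<lambda>n. (X n *\<^sub>v map_vec rat_of_int v) $ i - rat_of_int (v $ i))" by simp
    qed
    thus "X \<in> H_Qp p d v" unfolding H_Qp_def using X by auto
  qed
qed

lemma SO_Qp_mbdd: "X \<in> SO_Qp p d \<Longrightarrow> mbdd p d X"
  unfolding SO_Qp_def using qp_mat_mbdd[OF p] by auto

lemma SO_Qp_mcar: "X \<in> SO_Qp p d \<Longrightarrow> mcar d X"
  unfolding SO_Qp_def using qp_mat_mcar by auto

lemma null_det_ebdd: "padic_null p (\<lambda>n. f n - 1) \<Longrightarrow> ebdd p f"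
proof -
  assume "padic_null p (\<lambda>n. f n - 1)"
  hence "ebdd p (\<lambda>n. (f n - 1) + 1)" by (intro ebdd_add[OF p] null_ebdd[OF p] ebdd_const[OF p])
  thus "ebdd p f" by simp
qed

lemma SO_Qp_mult:
  assumes X: "X \<in> SO_Qp p d" and Y: "Y \<in> SO_Qp p d"
  shows "(\<lambda>n. X n * Y n) \<in> SO_Qp p d"
proof -
  have Xc: "mcar d X" and Yc: "mcar d Y" using X Y by (auto intro: SO_Qp_mcar)
  have Xb: "mbdd p d X" and Yb: "mbdd p d Y" using X Y by (auto intro: SO_Qp_mbdd)
  have XTc: "mcar d (\<lambda>n. transpose_mat (X n))" and YTc: "mcar d (\<lambda>n. transpose_mat (Y n))"
    using Xc Yc unfolding mcar_def by auto
  have YTb: "mbdd p d (\<lambda>n. transpose_mat (Y n))" by (rule mbdd_transpose[OF p Yc Yb])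
  have XTb: "mbdd p d (\<lambda>n. transpose_mat (X n))" by (rule mbdd_transpose[OF p Xc Xb])
  have 1: "mcar d (\<lambda>n. 1\<^sub>m d :: rat mat)" unfolding mcar_def by auto
  have XX: "qp_mat_eq p d (\<lambda>n. transpose_mat (X n) * X n) (\<lambda>n. 1\<^sub>m d)" using X unfolding SO_Qp_def by auto
  have YY: "qp_mat_eq p d (\<lambda>n. transpose_mat (Y n) * Y n) (\<lambda>n. 1\<^sub>m d)" using Y unfolding SO_Qp_def by auto
  have "qp_mat_eq p d (\<lambda>n. transpose_mat (X n * Y n) * (X n * Y n)) (\<lambda>n. transpose_mat (Y n) * ((transpose_mat (X n) * X n) * Y n))"
  proof (rule qeq_eq[OF p])
    fix n
    have c: "X n \<in> carrier_mat d d" "Y n \<in> carrier_mat d d" using Xc Yc unfolding mcar_def by auto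
    have as: "\<And>A B C. A \<in> carrier_mat d d \<Longrightarrow> B \<in> carrier_mat d d \<Longrightarrow> C \<in> carrier_mat d d \<Longrightarrow> (A*B)*C = A*(B*(C::rat mat))" by auto
    show "transpose_mat (X n * Y n) * (X n * Y n) = transpose_mat (Y n) * ((transpose_mat (X n) * X n) * Y n)"
      using c by (simp add: transpose_mult[OF c] as sq_mult)
  qed
  also have "qp_mat_eq p d \<dots> (\<lambda>n. transpose_mat (Y n) * (1\<^sub>m d * Y n))"
    by (intro qeq_cong_right[OF p] qeq_cong_left[OF p] XX Yb YTb YTc Yc 1 mcar_mult mcar_mult[OF XTc Xc])
  also have "qp_mat_eq p d \<dots> (\<lambda>n. 1\<^sub>m d)"
  proof -
    have "(\<lambda>n. transpose_mat (Y n) * (1\<^sub>m d * Y n)) = (\<lambda>n. transpose_mat (Y n) * Y n)"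
      using Yc by (intro ext) (simp add: mcarD)
    thus ?thesis using YY by simp
  qed
  finally have a: "qp_mat_eq p d (\<lambda>n. transpose_mat (X n * Y n) * (X n * Y n)) (\<lambda>n. 1\<^sub>m d)" .
  have dX: "padic_null p (\<lambda>n. det (X n) - 1)" and dY: "padic_null p (\<lambda>n. det (Y n) - 1)" using X Y unfolding SO_Qp_def by auto
  have "padic_null p (\<lambda>n. (det (X n) - 1) * det (Y n) + (det (Y n) - 1))"
    by (intro null_add[OF p] null_mult_bdd[OF p] dX dY null_det_ebdd dY)
  moreover have "(det (X n) - 1) * det (Y n) + (det (Y n) - 1) = det (X n * Y n) - 1" for n
    using det_mult[of "X n" d "Y n"] Xc Yc unfolding mcar_def by (simp add: algebra_simps)
  ultimately have b: "padic_null p (\<lambda>n. det (X n * Y n) - 1)" by simp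
  have q: "qp_mat p d (\<lambda>n. X n * Y n)" using X Y unfolding SO_Qp_def by (auto intro: qp_mat_mult[OF p])
  show ?thesis unfolding SO_Qp_def using a b q by auto
qed

end


lemma Gi_Vt_row:
  assumes d: "2 \<le> d" and prim: "primitive_vec d v" and gvv: "valid_gv d v gv"
    and Z: "Z \<in> carrier_mat d d" and j: "j < d"
  shows "(inv_mat d (map_mat rat_of_int gv) * Z) $$ (d - 1, j) = (transpose_mat (Vm d v) * Z) $$ (d - 1, j)"
proof -
  have gc: "gv \<in> carrier_mat d d" "det gv = 1" using gv_basic[OF gvv prim] by auto
  note I = inv_of_int[OF gc, where 'a = rat]
  have d1: "d - 1 < d" using d by auto
  have "(inv_mat d (map_mat rat_of_int gv) * Z) $$ (d - 1, j) = (\<Sum>k<d. inv_mat d (map_mat rat_of_int gv) $$ (d - 1, k) * Z $$ (k, j))"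
    by (rule idx_mult[OF I(4) Z d1 j])
  also have "\<dots> = (\<Sum>k<d. transpose_mat (Vm d v) $$ (d - 1, k) * Z $$ (k, j))"
    using Gi_row[OF d prim gvv] d1 by (intro sum.cong) (auto simp: Vm_def)
  also have "\<dots> = (transpose_mat (Vm d v) * Z) $$ (d - 1, j)"
    by (rule idx_mult[symmetric]) (use Vm_carrier Z d1 j in auto)
  finally show ?thesis .
qed

lemma Vt_G_row:
  assumes d: "2 \<le> d" and prim: "primitive_vec d v" and gvv: "valid_gv d v gv" and j: "j < d"
  shows "(transpose_mat (Vm d v) * map_mat rat_of_int gv) $$ (d - 1, j) = (if j = d - 1 then 1 else 0)"
proof -
  have gc: "gv \<in> carrier_mat d d" using gv_basic[OF gvv prim] by auto
  have d1: "d - 1 < d" using d by auto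
  have "(transpose_mat (Vm d v) * map_mat rat_of_int gv) $$ (d - 1, j) = (\<Sum>k<d. transpose_mat (Vm d v) $$ (d - 1, k) * map_mat rat_of_int gv $$ (k, j))"
    by (rule idx_mult) (use Vm_carrier gc d1 j in auto)
  also have "\<dots> = rat_of_int (\<Sum>k<d. v $ k * gv $$ (k, j))"
    using gc d1 j by (simp add: Vm_def)
  also have "\<dots> = (if j = d - 1 then 1 else 0)" using vtG[OF d prim gvv j] by simp
  finally show ?thesis .
qed

context fixes p :: nat assumes p: "prime p"
begin

lemmas qtrans'[trans] = qeq_trans[OF p]

lemma HQp_SO: "X \<in> H_Qp p d v \<Longrightarrow> X \<in> SO_Qp p d"
  unfolding H_Qp_def by auto

lemma HQp_mult:
  assumes d: "1 \<le> d" and vc: "v \<in> carrier_vec d" and X: "X \<in> H_Qp p d v" and Y: "Y \<in> H_Qp p d v"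
  shows "(\<lambda>n. X n * Y n) \<in> H_Qp p d v"
proof -
  have XS: "X \<in> SO_Qp p d" and YS: "Y \<in> SO_Qp p d" using X Y by (auto intro: HQp_SO)
  have Xc: "mcar d X" and Yc: "mcar d Y" using XS YS by (auto intro: SO_Qp_mcar[OF p])
  have Xb: "mbdd p d X" using XS by (rule SO_Qp_mbdd[OF p])
  have Vc: "mcar d (\<lambda>n. Vm d v)" using Vm_carrier by (rule mcar_const)
  have XV: "qp_mat_eq p d (\<lambda>n. X n * Vm d v) (\<lambda>n. Vm d v)" using X HQp_V[OF p d vc XS] by simp
  have YV: "qp_mat_eq p d (\<lambda>n. Y n * Vm d v) (\<lambda>n. Vm d v)" using Y HQp_V[OF p d vc YS] by simp
  have XYS: "(\<lambda>n. X n * Y n) \<in> SO_Qp p d" by (rule SO_Qp_mult[OF p XS YS])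
  have "qp_mat_eq p d (\<lambda>n. (X n * Y n) * Vm d v) (\<lambda>n. X n * (Y n * Vm d v))"
    using Xc Yc unfolding mcar_def by (intro qeq_eq[OF p] assoc_mult_mat[of _ d d _ d _ d] Vm_carrier) auto
  also have "qp_mat_eq p d \<dots> (\<lambda>n. X n * Vm d v)"
    by (rule qeq_cong_right[OF p Xc mcar_mult[OF Yc Vc] Vc Xb YV])
  also have "qp_mat_eq p d \<dots> (\<lambda>n. Vm d v)" by (rule XV)
  finally show ?thesis using HQp_V[OF p d vc XYS] by simp
qed

lemma mbdd_sub:
  assumes Mb: "mbdd p d M" and e: "\<And>n a b. a < m \<Longrightarrow> b < m \<Longrightarrow> N n $$ (a, b) = M n $$ (r a, s b)"
    and rs: "\<And>a. a < m \<Longrightarrow> r a < d" "\<And>b. b < m \<Longrightarrow> s b < d"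
  shows "mbdd p m N"
  unfolding mbdd_def
proof (intro allI impI)
  fix a b assume ab: "a < m" "b < m"
  have "ebdd p (\<lambda>n. M n $$ (r a, s b))" using Mb rs ab unfolding mbdd_def by auto
  thus "ebdd p (\<lambda>n. N n $$ (a, b))" using e[OF ab] by simp
qed

lemma conj_ASL:
  assumes d: "2 \<le> d" and prim: "primitive_vec d v" and gvv: "valid_gv d v gv" and X: "X \<in> H_Qp p d v"
  shows "conj_Qp d gv X \<in> ASL_Qp p d"
proof -
  have d1: "1 \<le> d" and dl: "d - 1 < d" using d by auto
  have vc: "v \<in> carrier_vec d" using prim unfolding primitive_vec_def by auto
  have gc: "gv \<in> carrier_mat d d" "det gv = 1" using gv_basic[OF gvv prim] by auto
  note I = inv_of_int[OF gc, where 'a = rat]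
  define G where "G = map_mat rat_of_int gv"
  define Gi where "Gi = inv_mat d G"
  have Gc: "G \<in> carrier_mat d d" "Gi \<in> carrier_mat d d" "Gi * G = 1\<^sub>m d" using I unfolding G_def Gi_def by auto
  have XS: "X \<in> SO_Qp p d" using X by (rule HQp_SO)
  have Xc: "mcar d X" using XS by (rule SO_Qp_mcar[OF p])
  have Xb: "mbdd p d X" using XS by (rule SO_Qp_mbdd[OF p])
  have Xq: "qp_mat p d X" using XS unfolding SO_Qp_def by auto
  define M where "M = conj_Qp d gv X"
  have Mdef: "M n = Gi * X n * G" for n unfolding M_def conj_Qp_def G_def Gi_def by simp
  have Mq: "qp_mat p d M"
  proof -
    have "qp_mat p d (\<lambda>n. (\<lambda>n. Gi * X n) n * G)"
      by (intro qp_mat_mult[OF p] qp_mat_const[OF p] Gc Xq)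
    moreover have "M = (\<lambda>n. Gi * X n * G)" using Mdef by (intro ext) simp
    ultimately show ?thesis by simp
  qed
  have Mc: "mcar d M" using Mq by (rule qp_mat_mcar)
  have Mb: "mbdd p d M" using Mq by (rule qp_mat_mbdd[OF p])
  have Vc: "mcar d (\<lambda>n. Vm d v)" using Vm_carrier by (rule mcar_const)
  have XTc: "mcar d (\<lambda>n. transpose_mat (X n))" using Xc unfolding mcar_def by auto
  have XTb: "mbdd p d (\<lambda>n. transpose_mat (X n))" by (rule mbdd_transpose[OF p Xc Xb])
  have XV: "qp_mat_eq p d (\<lambda>n. X n * Vm d v) (\<lambda>n. Vm d v)" using X HQp_V[OF p d1 vc XS] by simp
  have XX: "qp_mat_eq p d (\<lambda>n. transpose_mat (X n) * X n) (\<lambda>n. 1\<^sub>m d)" using XS unfolding SO_Qp_def by auto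
  have one: "mcar d (\<lambda>n. 1\<^sub>m d :: rat mat)" unfolding mcar_def by auto
  have "qp_mat_eq p d (\<lambda>n. transpose_mat (X n) * Vm d v) (\<lambda>n. transpose_mat (X n) * (X n * Vm d v))"
    by (rule qeq_cong_right[OF p XTc Vc mcar_mult[OF Xc Vc] XTb qeq_sym[OF p XV]])
  also have "qp_mat_eq p d \<dots> (\<lambda>n. (transpose_mat (X n) * X n) * Vm d v)"
    by (intro qeq_eq[OF p] assoc_mult_mat[symmetric, of _ d d _ d _ d] Vm_carrier) (use Xc in \<open>auto simp: mcar_def\<close>)
  also have "qp_mat_eq p d \<dots> (\<lambda>n. 1\<^sub>m d * Vm d v)"
    by (rule qeq_cong_left[OF p mcar_mult[OF XTc Xc] one Vc XX mbdd_const[OF p]])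
  also have "qp_mat_eq p d \<dots> (\<lambda>n. Vm d v)" using Vm_carrier[of d v] by (intro qeq_eq[OF p]) simp
  finally have XtV: "qp_mat_eq p d (\<lambda>n. transpose_mat (X n) * Vm d v) (\<lambda>n. Vm d v)" .
  have VTX: "qp_mat_eq p d (\<lambda>n. transpose_mat (Vm d v) * X n) (\<lambda>n. transpose_mat (Vm d v))"
  proof -
    have "qp_mat_eq p d (\<lambda>n. transpose_mat (transpose_mat (X n) * Vm d v)) (\<lambda>n. transpose_mat (Vm d v))"
      by (rule qeq_transpose[OF p mcar_mult[OF XTc Vc] Vc XtV])
    moreover have "transpose_mat (transpose_mat (X n) * Vm d v) = transpose_mat (Vm d v) * X n" for n
      using Xc Vm_carrier transpose_mult[of "transpose_mat (X n)" d d "Vm d v" d] unfolding mcar_def by simp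
    ultimately show ?thesis by simp
  qed
  have VTc: "mcar d (\<lambda>n. transpose_mat (Vm d v))" using Vm_carrier unfolding mcar_def by auto
  have Gcc: "mcar d (\<lambda>n. G)" using Gc by (intro mcar_const) auto
  have VTXG: "qp_mat_eq p d (\<lambda>n. transpose_mat (Vm d v) * X n * G) (\<lambda>n. transpose_mat (Vm d v) * G)"
    by (rule qeq_cong_left[OF p mcar_mult[OF VTc Xc] VTc Gcc VTX mbdd_const[OF p]])
  have Mrow: "padic_null p (\<lambda>n. M n $$ (d - 1, j) - (if j = d - 1 then 1 else 0))" if j: "j < d" for j
  proof -
    have "padic_null p (\<lambda>n. (transpose_mat (Vm d v) * X n * G) $$ (d - 1, j) - (transpose_mat (Vm d v) * G) $$ (d - 1, j))"
      using VTXG dl j unfolding qp_mat_eq_def by auto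
    moreover have "(transpose_mat (Vm d v) * X n * G) $$ (d - 1, j) = M n $$ (d - 1, j)" for n
    proof -
      have Xn: "X n \<in> carrier_mat d d" using Xc unfolding mcar_def by auto
      have "M n = Gi * (X n * G)" unfolding Mdef using Gc Xn by (intro assoc_mult_mat) auto
      have XG: "X n * G \<in> carrier_mat d d" using Xn Gc by (intro sq_mult) auto
      have "M n $$ (d - 1, j) = (Gi * (X n * G)) $$ (d - 1, j)" using \<open>M n = Gi * (X n * G)\<close> by simp
      also have "\<dots> = (transpose_mat (Vm d v) * (X n * G)) $$ (d - 1, j)"
        using Gi_Vt_row[OF d prim gvv XG j] unfolding Gi_def G_def by simp
      finally have "M n $$ (d - 1, j) = (transpose_mat (Vm d v) * (X n * G)) $$ (d - 1, j)" .
      also have "transpose_mat (Vm d v) * (X n * G) = transpose_mat (Vm d v) * X n * G"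
        using Xn Gc Vm_carrier by (intro assoc_mult_mat[symmetric]) auto
      finally show ?thesis by simp
    qed
    moreover have "(transpose_mat (Vm d v) * G) $$ (d - 1, j) = (if j = d - 1 then 1 else 0)"
      unfolding G_def by (rule Vt_G_row[OF d prim gvv j])
    ultimately show ?thesis by simp
  qed
  have r1: "\<forall>j<d - 1. padic_null p (\<lambda>n. M n $$ (d - 1, j))"
  proof (intro allI impI)
    fix j assume j: "j < d - 1"
    hence "j < d" "j \<noteq> d - 1" by auto
    thus "padic_null p (\<lambda>n. M n $$ (d - 1, j))" using Mrow[of j] by simp
  qed
  have r2: "padic_null p (\<lambda>n. M n $$ (d - 1, d - 1) - 1)" using Mrow[OF dl] by simp
  have detM: "det (M n) = det (X n)" for n
  proof -
    have Xn: "X n \<in> carrier_mat d d" using Xc unfolding mcar_def by auto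
    have GX: "Gi * X n \<in> carrier_mat d d" using Gc Xn by (intro sq_mult) auto
    have "det (M n) = det (Gi * X n) * det G" unfolding Mdef by (rule det_mult[OF GX Gc(1)])
    also have "det (Gi * X n) = det Gi * det (X n)" by (rule det_mult[OF Gc(2) Xn])
    finally have 1: "det (M n) = det Gi * det (X n) * det G" .
    have "det Gi * det G = 1" using det_mult[OF Gc(2) Gc(1)] Gc(3) by simp
    thus ?thesis using 1 by (simp add: algebra_simps)
  qed
  define D where "D n = det (topleft d (M n))" for n
  have Db: "ebdd p D"
  proof -
    have "ebdd p (\<lambda>n. det (topleft d (M n)))"
    proof (rule det_ebdd[OF p])
      show "mcar (d - 1) (\<lambda>n. topleft d (M n))" unfolding mcar_def topleft_def by auto
      show "mbdd p (d - 1) (\<lambda>n. topleft d (M n))"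
        by (rule mbdd_sub[OF Mb, where r="\<lambda>a. a" and s="\<lambda>b. b"]) (auto simp: topleft_def)
    qed
    thus ?thesis unfolding D_def by simp
  qed
  have cb: "ebdd p (\<lambda>n. cofactor (M n) (d - 1) j)" if j: "j < d - 1" for j
  proof -
    have "ebdd p (\<lambda>n. (-1) ^ (d - 1 + j) * det (mat_delete (M n) (d - 1) j))"
    proof (intro ebdd_mult[OF p] ebdd_const[OF p] det_ebdd[OF p])
      show "mcar (d - 1) (\<lambda>n. mat_delete (M n) (d - 1) j)"
        using Mc unfolding mcar_def by (intro allI mat_delete_carrier) auto
      show "mbdd p (d - 1) (\<lambda>n. mat_delete (M n) (d - 1) j)"
        by (rule mbdd_sub[OF Mb, where r="\<lambda>a. if a < d - 1 then a else Suc a" and s="\<lambda>b. if b < j then b else Suc b"])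
          (use Mc j in \<open>auto simp: mat_delete_def mcarD\<close>)
    qed
    thus ?thesis unfolding cofactor_def by simp
  qed
  define S where "S n = (\<Sum>j<d-1. M n $$ (d - 1, j) * cofactor (M n) (d - 1) j)" for n
  have expand: "D n - 1 = (det (X n) - 1) - S n - (M n $$ (d - 1, d - 1) - 1) * D n" for n
  proof -
    have Mn: "M n \<in> carrier_mat d d" using Mc unfolding mcar_def by auto
    have "det (X n) = S n + M n $$ (d - 1, d - 1) * D n"
      using det_last_expand[OF Mn d1] detM[of n] unfolding D_def S_def by simp
    thus ?thesis by (simp add: algebra_simps)
  qed
  have n1: "padic_null p (\<lambda>n. det (X n) - 1)" using XS unfolding SO_Qp_def by auto
  have n2: "padic_null p S"
  proof -
    have "padic_null p (\<lambda>n. \<Sum>j<d-1. M n $$ (d - 1, j) * cofactor (M n) (d - 1) j)"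
    proof (rule null_sum[OF p])
      fix j assume "j \<in> {..<d - 1}"
      hence "padic_null p (\<lambda>n. M n $$ (d - 1, j))" "ebdd p (\<lambda>n. cofactor (M n) (d - 1) j)" using r1 cb by auto
      thus "padic_null p (\<lambda>n. M n $$ (d - 1, j) * cofactor (M n) (d - 1) j)" by (rule null_mult_bdd[OF p])
    qed simp
    thus ?thesis unfolding S_def by simp
  qed
  have n3: "padic_null p (\<lambda>n. (M n $$ (d - 1, d - 1) - 1) * D n)" by (rule null_mult_bdd[OF p r2 Db])
  have "padic_null p (\<lambda>n. ((det (X n) - 1) - S n) - (M n $$ (d - 1, d - 1) - 1) * D n)"
    by (rule null_diff[OF p null_diff[OF p n1 n2] n3])
  hence "padic_null p (\<lambda>n. D n - 1)"
  proof (rule null_cong[OF p])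
    fix n show "((det (X n) - 1) - S n) - (M n $$ (d - 1, d - 1) - 1) * D n = D n - 1"
      using expand[of n] by simp
  qed
  hence r3: "padic_null p (\<lambda>n. det (topleft d (M n)) - 1)" unfolding D_def by simp
  show ?thesis unfolding M_def[symmetric] ASL_Qp_def using Mq r1 r2 r3 by auto
qed

end


lemma Zinv_add: "in_Z_inv_p p x \<Longrightarrow> in_Z_inv_p p y \<Longrightarrow> in_Z_inv_p p (x + y)"
proof -
  assume "in_Z_inv_p p x" "in_Z_inv_p p y"
  then obtain a k b l where x: "x = of_int a / of_nat p ^ k" and y: "y = of_int b / of_nat p ^ l"
    unfolding in_Z_inv_p_def by auto
  show ?thesis
  proof (cases "p = 0")
    case True
    hence "x + y = of_int ((if k = 0 then a else 0) + (if l = 0 then b else 0)) / of_nat p ^ 0"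
      using x y by (cases k; cases l) auto
    thus ?thesis unfolding in_Z_inv_p_def by blast
  next
    case False
    have "x + y = (of_int a * of_nat p ^ l + of_int b * of_nat p ^ k) / (of_nat p ^ k * of_nat p ^ l)"
      using x y False by (simp add: add_frac_eq)
    also have "\<dots> = of_int (a * int p ^ l + b * int p ^ k) / of_nat p ^ (k + l)"
      by (simp add: power_add)
    finally show ?thesis unfolding in_Z_inv_p_def by blast
  qed
qed

lemma Zinv_mult: "in_Z_inv_p p x \<Longrightarrow> in_Z_inv_p p y \<Longrightarrow> in_Z_inv_p p (x * y)"
proof -
  assume "in_Z_inv_p p x" "in_Z_inv_p p y"
  then obtain a k b l where x: "x = of_int a / of_nat p ^ k" and y: "y = of_int b / of_nat p ^ l"
    unfolding in_Z_inv_p_def by auto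
  have "x * y = of_int (a * b) / of_nat p ^ (k + l)" using x y by (simp add: power_add)
  thus ?thesis unfolding in_Z_inv_p_def by blast
qed

lemma Zinv_int: "in_Z_inv_p p (of_int a)"
  unfolding in_Z_inv_p_def by (intro exI[of _ a] exI[of _ 0]) simp

lemma Zinv_sum: "finite S \<Longrightarrow> (\<And>k. k \<in> S \<Longrightarrow> in_Z_inv_p p (f k)) \<Longrightarrow> in_Z_inv_p p (\<Sum>k\<in>S. f k)"
  by (induction S rule: finite_induct) (auto intro: Zinv_add Zinv_int[of _ 0, simplified])

lemma Zinv_mat_mult:
  assumes "A \<in> carrier_mat d d" "B \<in> carrier_mat d d" "Z_inv_p_mat p d A" "Z_inv_p_mat p d B"
  shows "Z_inv_p_mat p d (A * B)"
  unfolding Z_inv_p_mat_def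
proof (intro allI impI)
  fix i j assume ij: "i < d" "j < d"
  have "in_Z_inv_p p (\<Sum>k<d. A $$ (i, k) * B $$ (k, j))"
    using assms(3,4) ij unfolding Z_inv_p_mat_def by (intro Zinv_sum Zinv_mult) auto
  thus "in_Z_inv_p p ((A * B) $$ (i, j))" using idx_mult[OF assms(1,2) ij] by simp
qed

lemma Zinv_mat_int: "Z_inv_p_mat p d (map_mat rat_of_int A)" if "A \<in> carrier_mat d d"
  using that unfolding Z_inv_p_mat_def by (auto intro: Zinv_int)

definition Gm :: "int mat \<Rightarrow> rat mat" where "Gm gv = map_mat rat_of_int gv"
definition Gim :: "nat \<Rightarrow> int mat \<Rightarrow> rat mat" where "Gim d gv = inv_mat d (map_mat rat_of_int gv)"

definition gam :: "nat \<Rightarrow> int mat \<Rightarrow> rat mat \<Rightarrow> gelt" where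
  "gam d gv g = ((map_mat of_rat g, \<lambda>n. g), (map_mat of_rat (Gim d gv * g * Gm gv), \<lambda>n. Gim d gv * g * Gm gv))"

definition gcar :: "nat \<Rightarrow> gelt \<Rightarrow> bool" where
  "gcar d x = (case x of ((a, b), (c, e)) \<Rightarrow> a \<in> carrier_mat d d \<and> mcar d b \<and> c \<in> carrier_mat d d \<and> mcar d e)"

definition gone :: "nat \<Rightarrow> gelt" where
  "gone d = ((1\<^sub>m d, \<lambda>n. 1\<^sub>m d), (1\<^sub>m d, \<lambda>n. 1\<^sub>m d))"

lemma G_gcar: "x \<in> G_set p d \<Longrightarrow> gcar d x"
  unfolding G_set_def gcar_def SO_set_def ASL_set_def SO_Qp_def ASL_Qp_def qp_mat_def mcar_def by auto

lemma Gamma_gcar: "x \<in> Gamma_set p d \<Longrightarrow> gcar d x"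
  unfolding Gamma_set_def gcar_def SO_set_def ASL_set_def mcar_def by auto

lemma gcar_mult: assumes "gcar d x" "gcar d y" shows "gcar d (gmul x y)"
proof -
  obtain a b c e where x: "x = ((a, b), (c, e))" by (cases x) auto
  obtain a' b' c' e' where y: "y = ((a', b'), (c', e'))" by (cases y) auto
  show ?thesis using assms unfolding x y gcar_def mcar_def by (simp add: seq_mult_def sq_mult)
qed

lemma gmul_assoc: assumes "gcar d x" "gcar d y" "gcar d z" shows "gmul (gmul x y) z = gmul x (gmul y z)"
proof -
  obtain a b c e where x: "x = ((a, b), (c, e))" by (cases x) auto
  obtain a' b' c' e' where y: "y = ((a', b'), (c', e'))" by (cases y) auto
  obtain a'' b'' c'' e'' where z: "z = ((a'', b''), (c'', e''))" by (cases z) auto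
  have c: "a \<in> carrier_mat d d" "a' \<in> carrier_mat d d" "a'' \<in> carrier_mat d d"
    "c \<in> carrier_mat d d" "c' \<in> carrier_mat d d" "c'' \<in> carrier_mat d d"
    "\<And>n. b n \<in> carrier_mat d d" "\<And>n. b' n \<in> carrier_mat d d" "\<And>n. b'' n \<in> carrier_mat d d"
    "\<And>n. e n \<in> carrier_mat d d" "\<And>n. e' n \<in> carrier_mat d d" "\<And>n. e'' n \<in> carrier_mat d d"
    using assms unfolding x y z gcar_def mcar_def by auto
  have "(\<lambda>n. b n * b' n * b'' n) = (\<lambda>n. b n * (b' n * b'' n))"
    by (intro ext assoc_mult_mat[OF c(7) c(8) c(9)])
  moreover have "(\<lambda>n. e n * e' n * e'' n) = (\<lambda>n. e n * (e' n * e'' n))"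
    by (intro ext assoc_mult_mat[OF c(10) c(11) c(12)])
  moreover have "a * a' * a'' = a * (a' * a'')" by (rule assoc_mult_mat[OF c(1-3)])
  moreover have "c * c' * c'' = c * (c' * c'')" by (rule assoc_mult_mat[OF c(4-6)])
  ultimately show ?thesis unfolding x y z by (simp add: seq_mult_def)
qed

lemma gmul_one: assumes "gcar d x" shows "gmul x (gone d) = x"
proof -
  obtain a b c e where x: "x = ((a, b), (c, e))" by (cases x) auto
  have c: "a \<in> carrier_mat d d" "c \<in> carrier_mat d d"
    "\<And>n. b n \<in> carrier_mat d d" "\<And>n. e n \<in> carrier_mat d d"
    using assms unfolding x gcar_def mcar_def by auto
  have "(\<lambda>n. b n * 1\<^sub>m d) = b" "(\<lambda>n. e n * 1\<^sub>m d) = e" using c by (auto intro!: ext right_mult_one_mat)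
  thus ?thesis unfolding x gone_def using c by (simp add: seq_mult_def)
qed

lemma Gamma_mult:
  assumes d: "1 \<le> d" and x: "x \<in> Gamma_set p d" and y: "y \<in> Gamma_set p d"
  shows "gmul x y \<in> Gamma_set p d"
proof -
  obtain g1 g2 where xg: "x = ((map_mat of_rat g1, \<lambda>n. g1), (map_mat of_rat g2, \<lambda>n. g2))"
    and g: "g1 \<in> SO_set d" "Z_inv_p_mat p d g1" "g2 \<in> ASL_set d" "Z_inv_p_mat p d g2"
    using x unfolding Gamma_set_def by auto
  obtain h1 h2 where yh: "y = ((map_mat of_rat h1, \<lambda>n. h1), (map_mat of_rat h2, \<lambda>n. h2))"
    and h: "h1 \<in> SO_set d" "Z_inv_p_mat p d h1" "h2 \<in> ASL_set d" "Z_inv_p_mat p d h2"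
    using y unfolding Gamma_set_def by auto
  have c: "g1 \<in> carrier_mat d d" "g2 \<in> carrier_mat d d" "h1 \<in> carrier_mat d d" "h2 \<in> carrier_mat d d"
    using g h unfolding SO_set_def ASL_set_def by auto
  have "gmul x y = ((map_mat of_rat (g1 * h1), \<lambda>n. g1 * h1), (map_mat of_rat (g2 * h2), \<lambda>n. g2 * h2))"
    unfolding xg yh by (simp add: seq_mult_def of_rat_hom.mat_hom_mult[OF c(1,3)] of_rat_hom.mat_hom_mult[OF c(2,4)])
  moreover have "g1 * h1 \<in> SO_set d" by (rule SO_mult[OF g(1) h(1)])
  moreover have "g2 * h2 \<in> ASL_set d" by (rule ASL_mult[OF d g(3) h(3)])
  moreover have "Z_inv_p_mat p d (g1 * h1)" "Z_inv_p_mat p d (g2 * h2)"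
    using c g h by (auto intro: Zinv_mat_mult)
  ultimately show ?thesis unfolding Gamma_set_def by blast
qed

context fixes p :: nat assumes p: "prime p"
begin

lemma geq_refl: "geq p d x x"
  by (cases x) (auto intro: qeq_refl[OF p])

lemma geq_sym: "geq p d x y \<Longrightarrow> geq p d y x"
  by (cases x; cases y) (auto intro: qeq_sym[OF p])

lemma geq_trans: "geq p d x y \<Longrightarrow> geq p d y z \<Longrightarrow> geq p d x z"
  by (cases x; cases y; cases z) (auto intro: qeq_trans[OF p])

lemma geq_cong:
  assumes "gcar d x" "gcar d y" "geq p d x y" "g \<in> Gamma_set p d"
  shows "geq p d (gmul x g) (gmul y g)"
proof -
  obtain a b c e where x: "x = ((a, b), (c, e))" by (cases x) auto
  obtain a' b' c' e' where y: "y = ((a', b'), (c', e'))" by (cases y) auto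
  obtain g1 g2 where gg: "g = ((map_mat of_rat g1, \<lambda>n. g1), (map_mat of_rat g2, \<lambda>n. g2))"
    and gc: "g1 \<in> carrier_mat d d" "g2 \<in> carrier_mat d d"
    using assms(4) unfolding Gamma_set_def SO_set_def ASL_set_def by auto
  have c: "mcar d b" "mcar d e" "mcar d b'" "mcar d e'" using assms(1,2) unfolding x y gcar_def by auto
  have e: "a = a'" "c = c'" "qp_mat_eq p d b b'" "qp_mat_eq p d e e'" using assms(3) unfolding x y by auto
  have "qp_mat_eq p d (\<lambda>n. b n * g1) (\<lambda>n. b' n * g1)"
    by (rule qeq_cong_left[OF p c(1,3) mcar_const[OF gc(1)] e(3) mbdd_const[OF p]])
  moreover have "qp_mat_eq p d (\<lambda>n. e n * g2) (\<lambda>n. e' n * g2)"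
    by (rule qeq_cong_left[OF p c(2,4) mcar_const[OF gc(2)] e(4) mbdd_const[OF p]])
  ultimately show ?thesis unfolding x y gg using e by (simp add: seq_mult_def)
qed

lemma Ycos_sub:
  assumes d: "1 \<le> d" and A: "gcar d A" and B: "gcar d B" and g0: "g0 \<in> Gamma_set p d"
    and e: "geq p d A (gmul B g0)"
  shows "Ycos p d A \<subseteq> Ycos p d B"
proof
  fix y assume "y \<in> Ycos p d A"
  then obtain g where y: "y \<in> G_set p d" and g: "g \<in> Gamma_set p d" and yA: "geq p d y (gmul A g)"
    unfolding Ycos_def by auto
  have gc0: "gcar d g0" and gc: "gcar d g" using g0 g by (auto intro: Gamma_gcar)
  have Bg0: "gcar d (gmul B g0)" by (rule gcar_mult[OF B gc0])
  have "geq p d (gmul A g) (gmul (gmul B g0) g)" by (rule geq_cong[OF A Bg0 e g])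
  also have "gmul (gmul B g0) g = gmul B (gmul g0 g)" by (rule gmul_assoc[OF B gc0 gc])
  finally have "geq p d y (gmul B (gmul g0 g))" using yA geq_trans by blast
  moreover have "gmul g0 g \<in> Gamma_set p d" by (rule Gamma_mult[OF d g0 g])
  ultimately show "y \<in> Ycos p d B" unfolding Ycos_def using y by blast
qed

end


lemma map_rat_int: "map_mat (of_rat :: rat \<Rightarrow> real) (map_mat rat_of_int A) = map_mat real_of_int A"
  by (intro eq_matI) auto

lemma Gm_props:
  assumes d: "2 \<le> d" and prim: "primitive_vec d v" and gvv: "valid_gv d v gv"
  shows "Gm gv \<in> carrier_mat d d" "Gim d gv \<in> carrier_mat d d" "Gm gv * Gim d gv = 1\<^sub>m d" "Gim d gv * Gm gv = 1\<^sub>m d"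
    "Z_inv_p_mat p d (Gm gv)" "Z_inv_p_mat p d (Gim d gv)"
    "map_mat of_rat (Gm gv) = map_mat real_of_int gv"
    "map_mat of_rat (Gim d gv) = inv_mat d (map_mat real_of_int gv)"
proof -
  have gc: "gv \<in> carrier_mat d d" "det gv = 1" using gv_basic[OF gvv prim] by auto
  note I = inv_of_int[OF gc, where 'a = rat]
  note R = inv_of_int[OF gc, where 'a = real]
  show "Gm gv \<in> carrier_mat d d" "Gim d gv \<in> carrier_mat d d" "Gm gv * Gim d gv = 1\<^sub>m d" "Gim d gv * Gm gv = 1\<^sub>m d"
    using I unfolding Gm_def Gim_def by auto
  show "Z_inv_p_mat p d (Gm gv)" unfolding Gm_def by (rule Zinv_mat_int[OF gc(1)])
  show "Z_inv_p_mat p d (Gim d gv)" unfolding Gim_def I(1) by (rule Zinv_mat_int) (use adj_mat[OF gc(1)] in auto)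
  show "map_mat of_rat (Gm gv) = map_mat real_of_int gv" unfolding Gm_def by (rule map_rat_int)
  show "map_mat of_rat (Gim d gv) = inv_mat d (map_mat real_of_int gv)" unfolding Gim_def I(1) R(1) by (rule map_rat_int)
qed

lemma HZinv_transpose:
  assumes "g \<in> H_Zinvp p d v" shows "transpose_mat g \<in> H_Zinvp p d v"
proof -
  have g: "g \<in> SO_set d" "Z_inv_p_mat p d g" "g *\<^sub>v map_vec rat_of_int v = map_vec rat_of_int v"
    using assms unfolding H_Zinvp_def by auto
  have gc: "g \<in> carrier_mat d d" and gtg: "transpose_mat g * g = 1\<^sub>m d" using g(1) unfolding SO_set_def by auto
  have dv: "dim_vec (map_vec rat_of_int v) = d"
  proof -
    have "dim_vec (g *\<^sub>v map_vec rat_of_int v) = d" using gc by simp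
    thus ?thesis using g(3) by simp
  qed
  have vc: "map_vec rat_of_int v \<in> carrier_vec d" by (rule carrier_vecI[OF dv])
  have "transpose_mat g *\<^sub>v map_vec rat_of_int v = transpose_mat g *\<^sub>v (g *\<^sub>v map_vec rat_of_int v)" using g(3) by simp
  also have "\<dots> = (transpose_mat g * g) *\<^sub>v map_vec rat_of_int v" using gc vc by (intro assoc_mult_mat_vec[symmetric]) auto
  also have "\<dots> = map_vec rat_of_int v" using gtg vc by simp
  finally have gfix: "transpose_mat g *\<^sub>v map_vec rat_of_int v = map_vec rat_of_int v" .
  have "Z_inv_p_mat p d (transpose_mat g)" unfolding Z_inv_p_mat_def
  proof (intro allI impI)
    fix i j assume ij: "i < d" "j < d"
    have "transpose_mat g $$ (i, j) = g $$ (j, i)" using gc ij by simp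
    thus "in_Z_inv_p p (transpose_mat g $$ (i, j))" using g(2) ij unfolding Z_inv_p_mat_def by simp
  qed
  thus ?thesis unfolding H_Zinvp_def using SO_transpose[OF g(1)] gfix by blast
qed

lemma HZinv_one: "1\<^sub>m d \<in> H_Zinvp p d v" if "v \<in> carrier_vec d"
  using that SO_one unfolding H_Zinvp_def Z_inv_p_mat_def
  by (auto intro: Zinv_int[of _ 0, simplified] Zinv_int[of _ 1, simplified])

context fixes p :: nat assumes p: "prime p"
begin

lemma const_HQp:
  assumes g: "g \<in> H_Zinvp p d v" and vc: "v \<in> carrier_vec d" shows "(\<lambda>n. g) \<in> H_Qp p d v"
proof -
  have gs: "g \<in> SO_set d" "g *\<^sub>v map_vec rat_of_int v = map_vec rat_of_int v" using g unfolding H_Zinvp_def by auto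
  have gc: "g \<in> carrier_mat d d" using gs unfolding SO_set_def by auto
  have tg: "transpose_mat g * g = 1\<^sub>m d" and dg: "det g = 1" using gs(1) unfolding SO_set_def by auto
  have q1: "qp_mat_eq p d (\<lambda>n. transpose_mat g * g) (\<lambda>n. 1\<^sub>m d)" unfolding tg by (rule qeq_refl[OF p])
  have q2: "padic_null p (\<lambda>n. det g - 1)" unfolding dg by (simp add: null_zero[OF p])
  have "(\<lambda>n. g) \<in> SO_Qp p d"
    unfolding SO_Qp_def using qp_mat_const[OF p gc] q1 q2 by blast
  moreover have "\<forall>i<d. padic_null p (\<lambda>n. (g *\<^sub>v map_vec rat_of_int v) $ i - rat_of_int (v $ i))"
  proof (intro allI impI)
    fix i assume i: "i < d"
    have "(g *\<^sub>v map_vec rat_of_int v) $ i - rat_of_int (v $ i) = 0" using gs(2) vc i by simp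
    thus "padic_null p (\<lambda>n. (g *\<^sub>v map_vec rat_of_int v) $ i - rat_of_int (v $ i))" by (simp add: null_zero[OF p])
  qed
  ultimately show ?thesis unfolding H_Qp_def by auto
qed

lemma conj_const_ASL:
  assumes d: "2 \<le> d" and prim: "primitive_vec d v" and gvv: "valid_gv d v gv" and g: "g \<in> H_Zinvp p d v"
  shows "Gim d gv * g * Gm gv \<in> ASL_set d"
proof -
  have vc: "v \<in> carrier_vec d" using prim unfolding primitive_vec_def by auto
  have "conj_Qp d gv (\<lambda>n. g) \<in> ASL_Qp p d" by (rule conj_ASL[OF p d prim gvv const_HQp[OF g vc]])
  moreover have "conj_Qp d gv (\<lambda>n. g) = (\<lambda>n. Gim d gv * g * Gm gv)" unfolding conj_Qp_def Gim_def Gm_def by simp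
  ultimately have "(\<lambda>n. Gim d gv * g * Gm gv) \<in> ASL_Qp p d" by simp
  hence "Gim d gv * g * Gm gv \<in> carrier_mat d d" "\<forall>j<d - 1. padic_null p (\<lambda>n. (Gim d gv * g * Gm gv) $$ (d - 1, j))"
    "padic_null p (\<lambda>n. (Gim d gv * g * Gm gv) $$ (d - 1, d - 1) - 1)"
    "padic_null p (\<lambda>n. det (topleft d (Gim d gv * g * Gm gv)) - 1)"
    unfolding ASL_Qp_def qp_mat_def by auto
  thus ?thesis unfolding ASL_set_def by (simp add: null_const_iff[OF p])
qed

lemma gam_Gamma:
  assumes d: "2 \<le> d" and prim: "primitive_vec d v" and gvv: "valid_gv d v gv" and g: "g \<in> H_Zinvp p d v"
  shows "gam d gv g \<in> Gamma_set p d"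
proof -
  note G = Gm_props[OF d prim gvv]
  have gs: "g \<in> SO_set d" "Z_inv_p_mat p d g" using g unfolding H_Zinvp_def by auto
  have gc: "g \<in> carrier_mat d d" using gs unfolding SO_set_def by auto
  have "Z_inv_p_mat p d (Gim d gv * g * Gm gv)"
    using G gc gs by (intro Zinv_mat_mult sq_mult) auto
  thus ?thesis unfolding gam_def Gamma_set_def using gs conj_const_ASL[OF d prim gvv g] by blast
qed

lemma gam_inv:
  assumes d: "2 \<le> d" and prim: "primitive_vec d v" and gvv: "valid_gv d v gv" and g: "g \<in> H_Zinvp p d v"
  shows "gmul (gam d gv g) (gam d gv (transpose_mat g)) = gone d"
proof -
  note G = Gm_props[OF d prim gvv]
  have gs: "g \<in> SO_set d" using g unfolding H_Zinvp_def by auto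
  have gc: "g \<in> carrier_mat d d" and gtc: "transpose_mat g \<in> carrier_mat d d" using gs unfolding SO_set_def by auto
  have ggt: "g * transpose_mat g = 1\<^sub>m d" by (rule SO_right_inv[OF gs])
  have as: "\<And>A B C. A \<in> carrier_mat d d \<Longrightarrow> B \<in> carrier_mat d d \<Longrightarrow> C \<in> carrier_mat d d \<Longrightarrow> (A*B)*C = A*(B*(C::rat mat))" by auto
  have can: "\<And>X. X \<in> carrier_mat d d \<Longrightarrow> Gm gv * (Gim d gv * X) = X" using as G by (metis left_mult_one_mat)
  have can2: "\<And>X. X \<in> carrier_mat d d \<Longrightarrow> g * (transpose_mat g * X) = X" using as ggt gc gtc by (metis left_mult_one_mat)
  have e1: "Gim d gv * g * Gm gv * (Gim d gv * transpose_mat g * Gm gv) = 1\<^sub>m d"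
    using G gc gtc by (simp add: as sq_mult can can2)
  have e2: "map_mat (of_rat :: rat \<Rightarrow> real) g * map_mat of_rat (transpose_mat g) = 1\<^sub>m d"
  proof -
    have "map_mat (of_rat :: rat \<Rightarrow> real) g * map_mat of_rat (transpose_mat g) = map_mat of_rat (g * transpose_mat g)"
      by (rule of_rat_hom.mat_hom_mult[OF gc gtc, symmetric])
    also have "\<dots> = 1\<^sub>m d" unfolding ggt by (rule of_rat_hom.mat_hom_one)
    finally show ?thesis .
  qed
  have c1: "Gim d gv * g * Gm gv \<in> carrier_mat d d" "Gim d gv * transpose_mat g * Gm gv \<in> carrier_mat d d"
    using G gc gtc by (auto intro!: sq_mult)
  have e3: "map_mat (of_rat :: rat \<Rightarrow> real) (Gim d gv * g * Gm gv) * map_mat of_rat (Gim d gv * transpose_mat g * Gm gv) = 1\<^sub>m d"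
  proof -
    have "map_mat (of_rat :: rat \<Rightarrow> real) (Gim d gv * g * Gm gv) * map_mat of_rat (Gim d gv * transpose_mat g * Gm gv)
      = map_mat of_rat (Gim d gv * g * Gm gv * (Gim d gv * transpose_mat g * Gm gv))"
      by (rule of_rat_hom.mat_hom_mult[OF c1, symmetric])
    also have "\<dots> = 1\<^sub>m d" unfolding e1 by (rule of_rat_hom.mat_hom_one)
    finally show ?thesis .
  qed
  show ?thesis unfolding gam_def gone_def using e1 e2 e3 ggt by (simp add: seq_mult_def)
qed

lemma gone_Gamma: assumes d: "1 \<le> d" shows "gone d \<in> Gamma_set p d"
proof -
  have "1\<^sub>m d \<in> SO_set d" "Z_inv_p_mat p d (1\<^sub>m d)"
    using SO_one unfolding Z_inv_p_mat_def
    by (auto intro: Zinv_int[of _ 0, simplified] Zinv_int[of _ 1, simplified])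
  moreover have "(1\<^sub>m d :: rat mat) \<in> ASL_set d" unfolding ASL_iff[OF d] lastrow_e_def using d by auto
  moreover have "map_mat (of_rat :: rat \<Rightarrow> real) (1\<^sub>m d) = 1\<^sub>m d" by (rule of_rat_hom.mat_hom_one)
  ultimately show ?thesis unfolding gone_def Gamma_set_def by force
qed

lemma Ycos_self: assumes d: "1 \<le> d" and x: "x \<in> G_set p d" shows "x \<in> Ycos p d x"
proof -
  have "geq p d x (gmul x (gone d))" using gmul_one[OF G_gcar[OF x]] geq_refl[OF p] by simp
  thus ?thesis unfolding Ycos_def using x gone_Gamma[OF d] by blast
qed

lemma gam_gcar: assumes "gam d gv g \<in> Gamma_set p d" shows "gcar d (gam d gv g)"
  using Gamma_gcar[OF assms] .

lemma Ycos_eq: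
  assumes d: "2 \<le> d" and prim: "primitive_vec d v" and gvv: "valid_gv d v gv" and g: "g \<in> H_Zinvp p d v"
    and A: "gcar d A" and B: "gcar d B" and e: "geq p d A (gmul B (gam d gv g))"
  shows "Ycos p d A = Ycos p d B"
proof
  have d1: "1 \<le> d" using d by auto
  have G1: "gam d gv g \<in> Gamma_set p d" by (rule gam_Gamma[OF d prim gvv g])
  have gt: "transpose_mat g \<in> H_Zinvp p d v" by (rule HZinv_transpose[OF g])
  have G2: "gam d gv (transpose_mat g) \<in> Gamma_set p d" by (rule gam_Gamma[OF d prim gvv gt])
  show "Ycos p d A \<subseteq> Ycos p d B" by (rule Ycos_sub[OF p d1 A B G1 e])
  have Bg: "gcar d (gmul B (gam d gv g))" by (rule gcar_mult[OF B Gamma_gcar[OF G1]])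
  have "geq p d (gmul A (gam d gv (transpose_mat g))) (gmul (gmul B (gam d gv g)) (gam d gv (transpose_mat g)))"
    by (rule geq_cong[OF p A Bg e G2])
  also have "gmul (gmul B (gam d gv g)) (gam d gv (transpose_mat g)) = gmul B (gmul (gam d gv g) (gam d gv (transpose_mat g)))"
    by (rule gmul_assoc[OF B Gamma_gcar[OF G1] Gamma_gcar[OF G2]])
  also have "\<dots> = B" using gam_inv[OF d prim gvv g] gmul_one[OF B] by simp
  finally have "geq p d B (gmul A (gam d gv (transpose_mat g)))" by (rule geq_sym[OF p])
  thus "Ycos p d B \<subseteq> Ycos p d A" by (rule Ycos_sub[OF p d1 B A G2])
qed

end


lemma seq_one: "mcar d X \<Longrightarrow> seq_mult (\<lambda>n. 1\<^sub>m d) X = X"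
  unfolding seq_mult_def mcar_def by (auto intro!: ext left_mult_one_mat)

lemma ASL_Qp_mcar: "X \<in> ASL_Qp p d \<Longrightarrow> mcar d X"
  unfolding ASL_Qp_def qp_mat_def mcar_def by auto

lemma HR_props: "h \<in> H_R d v \<Longrightarrow> h \<in> SO_set d \<and> h *\<^sub>v map_vec real_of_int v = map_vec real_of_int v"
  unfolding H_R_def by auto

context fixes p :: nat assumes p: "prime p"
begin

lemma Ov_G:
  assumes d: "2 \<le> d" and prim: "primitive_vec d v" and gvv: "valid_gv d v gv" and kvv: "valid_kv d v kv"
    and l: "l \<in> Lv_RQp p d v gv"
  shows "gmul ((kv, \<lambda>n. 1\<^sub>m d), (a_mat d v * kv * map_mat real_of_int gv, \<lambda>n. 1\<^sub>m d)) l \<in> G_set p d"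
proof -
  obtain hr hp where lh: "l = ((hr, hp), (conj_R d gv hr, conj_Qp d gv hp))" and hr: "hr \<in> H_R d v" and hp: "hp \<in> H_Qp p d v"
    using l unfolding Lv_RQp_def by auto
  have hrs: "hr \<in> SO_set d" "hr *\<^sub>v map_vec real_of_int v = map_vec real_of_int v" using HR_props[OF hr] by auto
  have kso: "kv \<in> SO_set d" using kvv unfolding valid_kv_def by auto
  have hpS: "hp \<in> SO_Qp p d" using hp by (rule HQp_SO[OF p])
  have hpc: "mcar d hp" using hpS by (rule SO_Qp_mcar[OF p])
  have cA: "conj_Qp d gv hp \<in> ASL_Qp p d" by (rule conj_ASL[OF p d prim gvv hp])
  have cc: "mcar d (conj_Qp d gv hp)" using cA by (rule ASL_Qp_mcar)
  have d1: "1 \<le> d" using d by auto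
  have A: "a_mat d v * kv * map_mat real_of_int gv * conj_R d gv hr \<in> ASL_set d"
    unfolding conj_R_eq(1)[OF d prim gvv kvv hrs]
    by (rule ASL_K_mult[OF d1 conjK[OF d prim kvv hrs] A0_ASL[OF d prim gvv kvv]])
  show ?thesis unfolding lh G_set_def using SO_mult[OF kso hrs(1)] seq_one[OF hpc] seq_one[OF cc] hpS cA A
    by simp
qed

lemma kv_fix:
  assumes d: "2 \<le> d" and prim: "primitive_vec d v" and kvv: "valid_kv d v kv" and k: "k \<in> K_set d"
  shows "(transpose_mat kv * k * kv) *\<^sub>v map_vec real_of_int v = map_vec real_of_int v"
proof -
  have kso: "kv \<in> SO_set d" using kvv unfolding valid_kv_def by auto
  have kc: "kv \<in> carrier_mat d d" using kso unfolding SO_set_def by auto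
  have ktc: "transpose_mat kv \<in> carrier_mat d d" using kc by simp
  have kkc: "k \<in> carrier_mat d d" and ke: "k *\<^sub>v e_last d = e_last d" using k unfolding K_set_def SO_set_def by auto
  have vc: "map_vec real_of_int v \<in> carrier_vec d" using prim unfolding primitive_vec_def by auto
  have ec: "(e_last d :: real vec) \<in> carrier_vec d" unfolding e_last_def by simp
  have vp: "vnorm v > 0" by (rule vnorm_pos[OF prim])
  have "(transpose_mat kv * k * kv) *\<^sub>v map_vec real_of_int v = (transpose_mat kv * k) *\<^sub>v (kv *\<^sub>v map_vec real_of_int v)"
    by (rule assoc_mult_mat_vec[OF sq_mult[OF ktc kkc] kc vc])
  also have "kv *\<^sub>v map_vec real_of_int v = vnorm v \<cdot>\<^sub>v e_last d" using kvv unfolding valid_kv_def by auto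
  also have "(transpose_mat kv * k) *\<^sub>v (vnorm v \<cdot>\<^sub>v e_last d) = transpose_mat kv *\<^sub>v (k *\<^sub>v (vnorm v \<cdot>\<^sub>v e_last d))"
    by (rule assoc_mult_mat_vec[OF ktc kkc]) (use ec in auto)
  also have "k *\<^sub>v (vnorm v \<cdot>\<^sub>v e_last d) = vnorm v \<cdot>\<^sub>v e_last d"
    using mult_mat_vec[OF kkc ec] ke by simp
  also have "transpose_mat kv *\<^sub>v (vnorm v \<cdot>\<^sub>v e_last d) = vnorm v \<cdot>\<^sub>v (transpose_mat kv *\<^sub>v e_last d)"
    by (rule mult_mat_vec[OF ktc ec])
  also have "\<dots> = map_vec real_of_int v" unfolding kvT_e[OF d prim kvv] using vp by (simp add: smult_smult_assoc)
  finally show ?thesis .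
qed

lemma Ovh_eq:
  assumes d: "2 \<le> d" and prim: "primitive_vec d v" and gvv: "valid_gv d v gv" and kvv: "valid_kv d v kv"
    and u: "u \<in> DeltaK_LvZp p d v gv" and h: "h \<in> H_Qp p d v"
  shows "\<exists>l \<in> Lv_RQp p d v gv. gmul u ((kv, h), (a_mat d v * kv * map_mat real_of_int gv, conj_Qp d gv h))
      = gmul ((kv, \<lambda>n. 1\<^sub>m d), (a_mat d v * kv * map_mat real_of_int gv, \<lambda>n. 1\<^sub>m d)) l"
proof -
  obtain k a where uk: "u = ((k, a), (k, conj_Qp d gv a))" and k: "k \<in> K_set d" and a: "a \<in> H_Zp p d v"
    using u unfolding DeltaK_LvZp_def by auto
  have d1: "1 \<le> d" using d by auto
  have vc: "v \<in> carrier_vec d" using prim unfolding primitive_vec_def by auto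
  have aQ: "a \<in> H_Qp p d v" using a unfolding H_Zp_def by auto
  have kso: "kv \<in> SO_set d" using kvv unfolding valid_kv_def by auto
  have kc: "kv \<in> carrier_mat d d" using kso unfolding SO_set_def by auto
  have ktc: "transpose_mat kv \<in> carrier_mat d d" using kc by simp
  have kkt: "kv * transpose_mat kv = 1\<^sub>m d" by (rule SO_right_inv[OF kso])
  have kK: "k \<in> SO_set d" using k unfolding K_set_def by auto
  have kkc: "k \<in> carrier_mat d d" using kK unfolding SO_set_def by auto
  define hr where "hr = transpose_mat kv * k * kv"
  have hrc: "hr \<in> carrier_mat d d" unfolding hr_def using ktc kkc kc by (intro sq_mult)
  have hrS: "hr \<in> SO_set d" unfolding hr_def by (intro SO_mult SO_transpose kso kK)
  have hrv: "hr *\<^sub>v map_vec real_of_int v = map_vec real_of_int v" unfolding hr_def by (rule kv_fix[OF d prim kvv k])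
  have hrH: "hr \<in> H_R d v" unfolding H_R_def using hrS hrv by auto
  define hp where "hp = seq_mult a h"
  have hpH: "hp \<in> H_Qp p d v" unfolding hp_def seq_mult_def by (rule HQp_mult[OF p d1 vc aQ h])
  have lL: "((hr, hp), (conj_R d gv hr, conj_Qp d gv hp)) \<in> Lv_RQp p d v gv"
    unfolding Lv_RQp_def using hrH hpH by auto
  have as: "\<And>A B C. A \<in> carrier_mat d d \<Longrightarrow> B \<in> carrier_mat d d \<Longrightarrow> C \<in> carrier_mat d d \<Longrightarrow> (A*B)*C = A*(B*(C::real mat))" by auto
  have can: "\<And>X. X \<in> carrier_mat d d \<Longrightarrow> kv * (transpose_mat kv * X) = X" using as kkt kc ktc by (metis left_mult_one_mat)
  have e1: "kv * hr = k * kv" unfolding hr_def using kc ktc kkc by (simp add: as sq_mult can)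
  have ac: "mcar d a" and hc: "mcar d h" using aQ h by (auto intro: SO_Qp_mcar[OF p] HQp_SO[OF p])
  have hpc: "mcar d hp" unfolding hp_def seq_mult_def using ac hc by (rule mcar_mult)
  have e2: "seq_mult (\<lambda>n. 1\<^sub>m d) hp = seq_mult a h" using seq_one[OF hpc] unfolding hp_def by simp
  have GRc: "map_mat real_of_int gv \<in> carrier_mat d d" using gv_basic[OF gvv prim] by auto
  have e3: "a_mat d v * kv * map_mat real_of_int gv * conj_R d gv hr = k * (a_mat d v * kv * map_mat real_of_int gv)"
  proof -
    have "a_mat d v * kv * map_mat real_of_int gv * conj_R d gv hr = a_mat d v * (kv * hr * map_mat real_of_int gv)"
      by (rule conj_R_eq(2)[OF d prim gvv kvv hrS hrv])
    also have "kv * hr * map_mat real_of_int gv = k * (kv * map_mat real_of_int gv)"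
      using e1 kc hrc GRc kkc by (simp add: as)
    also have "a_mat d v * (k * (kv * map_mat real_of_int gv)) = (a_mat d v * k) * (kv * map_mat real_of_int gv)"
      using a_mat_carrier kkc kc GRc by (simp add: as sq_mult)
    also have "a_mat d v * k = k * a_mat d v" by (rule a_comm_K[OF k d1])
    also have "k * a_mat d v * (kv * map_mat real_of_int gv) = k * (a_mat d v * kv * map_mat real_of_int gv)"
      using a_mat_carrier kkc kc GRc by (simp add: as sq_mult)
    finally show ?thesis .
  qed
  note G = Gm_props[OF d prim gvv]
  have asq: "\<And>A B C. A \<in> carrier_mat d d \<Longrightarrow> B \<in> carrier_mat d d \<Longrightarrow> C \<in> carrier_mat d d \<Longrightarrow> (A*B)*C = A*(B*(C::rat mat))" by auto
  have canq: "\<And>X. X \<in> carrier_mat d d \<Longrightarrow> Gm gv * (Gim d gv * X) = X" using asq G by (metis left_mult_one_mat)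
  have e4: "seq_mult (conj_Qp d gv a) (conj_Qp d gv h) = seq_mult (\<lambda>n. 1\<^sub>m d) (conj_Qp d gv hp)"
  proof -
    have "seq_mult (\<lambda>n. 1\<^sub>m d) (conj_Qp d gv hp) = conj_Qp d gv hp"
      by (rule seq_one) (use conj_ASL[OF p d prim gvv hpH] in \<open>rule ASL_Qp_mcar\<close>)
    moreover have "seq_mult (conj_Qp d gv a) (conj_Qp d gv h) = conj_Qp d gv hp"
    proof -
      have e: "Gim d gv * a n * Gm gv * (Gim d gv * h n * Gm gv) = Gim d gv * (a n * h n) * Gm gv" for n
      proof -
        have an: "a n \<in> carrier_mat d d" and hn: "h n \<in> carrier_mat d d" using ac hc unfolding mcar_def by auto
        show ?thesis using an hn G by (simp add: asq sq_mult canq)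
      qed
      show ?thesis unfolding seq_mult_def conj_Qp_def hp_def using e unfolding Gim_def Gm_def by simp
    qed
    ultimately show ?thesis by simp
  qed
  show ?thesis
    by (rule bexI[OF _ lL]) (simp add: uk e1 e2 e3 e4)
qed

end


lemma SO_map_rat:
  assumes g: "g \<in> SO_set d" shows "map_mat (of_rat :: rat \<Rightarrow> real) g \<in> SO_set d"
proof -
  have gc: "g \<in> carrier_mat d d" and gtg: "transpose_mat g * g = 1\<^sub>m d" and dg: "det g = 1"
    using g unfolding SO_set_def by auto
  have "transpose_mat (map_mat (of_rat :: rat \<Rightarrow> real) g) * map_mat of_rat g = map_mat of_rat (transpose_mat g * g)"
    unfolding map_mat_transpose by (rule of_rat_hom.mat_hom_mult[symmetric]) (use gc in auto)
  also have "\<dots> = 1\<^sub>m d" unfolding gtg by (rule of_rat_hom.mat_hom_one)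
  finally show ?thesis unfolding SO_set_def using gc dg of_rat_hom.hom_det[of g] by auto
qed

lemma fix_map_rat:
  assumes g: "g \<in> carrier_mat d d" and vc: "v \<in> carrier_vec d"
    and fx: "g *\<^sub>v map_vec rat_of_int v = map_vec rat_of_int v"
  shows "map_mat (of_rat :: rat \<Rightarrow> real) g *\<^sub>v map_vec real_of_int v = map_vec real_of_int v"
proof -
  have vq: "map_vec rat_of_int v \<in> carrier_vec d" using vc by simp
  have r: "map_vec (of_rat :: rat \<Rightarrow> real) (map_vec rat_of_int v) = map_vec real_of_int v" by (intro eq_vecI) auto
  have "map_vec (of_rat :: rat \<Rightarrow> real) (g *\<^sub>v map_vec rat_of_int v) = map_mat of_rat g *\<^sub>v map_vec of_rat (map_vec rat_of_int v)"
    by (rule of_rat_hom.mult_mat_vec_hom[OF g vq])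
  thus ?thesis using fx r by simp
qed

lemma fix_unmap_rat:
  assumes g: "g \<in> carrier_mat d d" and vc: "v \<in> carrier_vec d"
    and fx: "map_mat (of_rat :: rat \<Rightarrow> real) g *\<^sub>v map_vec real_of_int v = map_vec real_of_int v"
  shows "g *\<^sub>v map_vec rat_of_int v = map_vec rat_of_int v"
proof -
  have vq: "map_vec rat_of_int v \<in> carrier_vec d" using vc by simp
  have r: "map_vec (of_rat :: rat \<Rightarrow> real) (map_vec rat_of_int v) = map_vec real_of_int v" by (intro eq_vecI) auto
  have "map_vec (of_rat :: rat \<Rightarrow> real) (g *\<^sub>v map_vec rat_of_int v) = map_mat of_rat g *\<^sub>v map_vec of_rat (map_vec rat_of_int v)"
    by (rule of_rat_hom.mult_mat_vec_hom[OF g vq])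
  hence "map_vec (of_rat :: rat \<Rightarrow> real) (g *\<^sub>v map_vec rat_of_int v) = map_vec of_rat (map_vec rat_of_int v)"
    using fx r by simp
  thus ?thesis by (rule of_rat_hom.vec_hom_inj)
qed

context fixes p :: nat assumes p: "prime p"
begin

lemma Ov_sub:
  assumes d: "2 \<le> d" and prim: "primitive_vec d v" and gvv: "valid_gv d v gv" and kvv: "valid_kv d v kv"
    and dc: "double_coset_reps p d v M" and l: "l \<in> Lv_RQp p d v gv"
  shows "\<exists>h\<in>M. Ycos p d (gmul ((kv, \<lambda>n. 1\<^sub>m d), (a_mat d v * kv * map_mat real_of_int gv, \<lambda>n. 1\<^sub>m d)) l) \<in> O_vh p d v gv kv h"
proof -
  define A0 where "A0 = a_mat d v * kv * map_mat real_of_int gv"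
  define x0 :: gelt where "x0 = ((kv, \<lambda>n. 1\<^sub>m d), (A0, \<lambda>n. 1\<^sub>m d))"
  obtain hr hp where lh: "l = ((hr, hp), (conj_R d gv hr, conj_Qp d gv hp))" and hr: "hr \<in> H_R d v" and hp: "hp \<in> H_Qp p d v"
    using l unfolding Lv_RQp_def by auto
  obtain h a g where h: "h \<in> M" and a: "a \<in> H_Zp p d v" and g: "g \<in> H_Zinvp p d v"
    and hpe: "qp_mat_eq p d hp (\<lambda>n. a n * h n * g)"
    using dc hp unfolding double_coset_reps_def by blast
  have d1: "1 \<le> d" using d by auto
  have vc: "v \<in> carrier_vec d" using prim unfolding primitive_vec_def by auto
  have hQ: "h \<in> H_Qp p d v" using h dc unfolding double_coset_reps_def by auto
  have aQ: "a \<in> H_Qp p d v" using a unfolding H_Zp_def by auto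
  have hrs: "hr \<in> SO_set d" "hr *\<^sub>v map_vec real_of_int v = map_vec real_of_int v" using HR_props[OF hr] by auto
  have gs: "g \<in> SO_set d" "Z_inv_p_mat p d g" using g unfolding H_Zinvp_def by auto
  have gc: "g \<in> carrier_mat d d" using gs unfolding SO_set_def by auto
  have gt: "transpose_mat g \<in> H_Zinvp p d v" by (rule HZinv_transpose[OF g])
  define gR where "gR = map_mat (of_rat :: rat \<Rightarrow> real) g"
  have gRS: "gR \<in> SO_set d" unfolding gR_def by (rule SO_map_rat[OF gs(1)])
  have gRc: "gR \<in> carrier_mat d d" and gRtc: "transpose_mat gR \<in> carrier_mat d d" using gRS unfolding SO_set_def by auto
  have gRtg: "transpose_mat gR * gR = 1\<^sub>m d" using gRS unfolding SO_set_def by auto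
  have gRt_fix: "transpose_mat gR *\<^sub>v map_vec real_of_int v = map_vec real_of_int v"
  proof -
    have "transpose_mat g *\<^sub>v map_vec rat_of_int v = map_vec rat_of_int v" using gt unfolding H_Zinvp_def by auto
    hence "map_mat (of_rat :: rat \<Rightarrow> real) (transpose_mat g) *\<^sub>v map_vec real_of_int v = map_vec real_of_int v"
      by (intro fix_map_rat[OF _ vc]) (use gc in auto)
    thus ?thesis unfolding gR_def map_mat_transpose .
  qed
  define hh where "hh = hr * transpose_mat gR"
  have hhS: "hh \<in> SO_set d" unfolding hh_def by (intro SO_mult SO_transpose hrs(1) gRS)
  have hrc: "hr \<in> carrier_mat d d" using hrs unfolding SO_set_def by auto
  have hhfix: "hh *\<^sub>v map_vec real_of_int v = map_vec real_of_int v"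
    unfolding hh_def using assoc_mult_mat_vec[OF hrc gRtc, of "map_vec real_of_int v"] vc gRt_fix hrs(2) by simp
  define k where "k = kv * hh * transpose_mat kv"
  have kK: "k \<in> K_set d" unfolding k_def by (rule conjK[OF d prim kvv hhS hhfix])
  define u :: gelt where "u = ((k, a), (k, conj_Qp d gv a))"
  have uD: "u \<in> DeltaK_LvZp p d v gv" unfolding u_def DeltaK_LvZp_def using kK a by auto
  define xh :: gelt where "xh = ((kv, h), (A0, conj_Qp d gv h))"
  have AG: "gmul x0 l \<in> G_set p d" unfolding x0_def A0_def by (rule Ov_G[OF p d prim gvv kvv l])
  obtain l' where l': "l' \<in> Lv_RQp p d v gv" and Bl: "gmul u xh = gmul x0 l'"
    using Ovh_eq[OF p d prim gvv kvv uD hQ] unfolding xh_def x0_def A0_def by blast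
  have BG: "gmul u xh \<in> G_set p d" unfolding Bl x0_def A0_def by (rule Ov_G[OF p d prim gvv kvv l'])
  have kso: "kv \<in> SO_set d" using kvv unfolding valid_kv_def by auto
  have kc: "kv \<in> carrier_mat d d" using kso unfolding SO_set_def by auto
  have ktc: "transpose_mat kv \<in> carrier_mat d d" using kc by simp
  have ktk: "transpose_mat kv * kv = 1\<^sub>m d" using kso unfolding SO_set_def by auto
  have as: "\<And>A B C. A \<in> carrier_mat d d \<Longrightarrow> B \<in> carrier_mat d d \<Longrightarrow> C \<in> carrier_mat d d \<Longrightarrow> (A*B)*C = A*(B*(C::real mat))" by auto
  have can1: "\<And>X. X \<in> carrier_mat d d \<Longrightarrow> transpose_mat kv * (kv * X) = X" using as ktk kc ktc by (metis left_mult_one_mat)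
  have can2: "\<And>X. X \<in> carrier_mat d d \<Longrightarrow> transpose_mat gR * (gR * X) = X" using as gRtg gRc gRtc by (metis left_mult_one_mat)
  have kcc: "k \<in> carrier_mat d d" using kK unfolding K_set_def SO_set_def by auto
  have g1: "kv * hr = k * kv * gR"
  proof -
    have "k * kv * gR = kv * (hr * (transpose_mat gR * (transpose_mat kv * (kv * gR))))"
      unfolding k_def hh_def using kc ktc hrc gRc gRtc by (simp add: as sq_mult)
    also have "\<dots> = kv * hr" using kc hrc gRc gRtc by (simp add: can1 gRtg)
    finally show ?thesis by simp
  qed
  have GRc: "map_mat real_of_int gv \<in> carrier_mat d d" using gv_basic[OF gvv prim] by auto
  note G = Gm_props[OF d prim gvv]
  define GRi where "GRi = inv_mat d (map_mat real_of_int gv)"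
  have GRic: "GRi \<in> carrier_mat d d" and GGi: "map_mat real_of_int gv * GRi = 1\<^sub>m d"
    using inv_of_int[OF gv_basic(1,2)[OF gvv prim], where 'a = real] unfolding GRi_def by auto
  have can3: "\<And>X. X \<in> carrier_mat d d \<Longrightarrow> map_mat real_of_int gv * (GRi * X) = X" using as GGi GRc GRic by (metis left_mult_one_mat)
  have mapG: "map_mat (of_rat :: rat \<Rightarrow> real) (Gim d gv * g * Gm gv) = GRi * gR * map_mat real_of_int gv"
  proof -
    have "map_mat (of_rat :: rat \<Rightarrow> real) (Gim d gv * g * Gm gv) = map_mat of_rat (Gim d gv * g) * map_mat of_rat (Gm gv)"
      by (rule of_rat_hom.mat_hom_mult) (use G gc in auto)
    also have "map_mat (of_rat :: rat \<Rightarrow> real) (Gim d gv * g) = map_mat of_rat (Gim d gv) * gR"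
      unfolding gR_def by (rule of_rat_hom.mat_hom_mult) (use G gc in auto)
    finally show ?thesis using G unfolding GRi_def by simp
  qed
  have ac: "a_mat d v \<in> carrier_mat d d" by (rule a_mat_carrier)
  have g3: "A0 * conj_R d gv hr = k * A0 * map_mat of_rat (Gim d gv * g * Gm gv)"
  proof -
    have "A0 * conj_R d gv hr = a_mat d v * (kv * hr * map_mat real_of_int gv)"
      unfolding A0_def by (rule conj_R_eq(2)[OF d prim gvv kvv hrs])
    have "k * A0 * map_mat of_rat (Gim d gv * g * Gm gv) = k * (a_mat d v * (kv * (gR * map_mat real_of_int gv)))"
      unfolding mapG A0_def using kcc ac kc GRc GRic gRc by (simp add: as sq_mult can3)
    also have "\<dots> = (k * a_mat d v) * (kv * (gR * map_mat real_of_int gv))"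
      using kcc ac kc GRc gRc by (simp add: as sq_mult)
    also have "k * a_mat d v = a_mat d v * k" by (rule a_comm_K[OF kK d1, symmetric])
    also have "a_mat d v * k * (kv * (gR * map_mat real_of_int gv)) = a_mat d v * ((k * kv * gR) * map_mat real_of_int gv)"
      using kcc ac kc GRc gRc by (simp add: as sq_mult)
    also have "k * kv * gR = kv * hr" using g1 by simp
    finally show ?thesis using \<open>A0 * conj_R d gv hr = a_mat d v * (kv * hr * map_mat real_of_int gv)\<close> by simp
  qed
  have hpS: "hp \<in> SO_Qp p d" using hp by (rule HQp_SO[OF p])
  have hpc: "mcar d hp" using hpS by (rule SO_Qp_mcar[OF p])
  have ahc: "mcar d a" "mcar d h" using aQ hQ by (auto intro: SO_Qp_mcar[OF p] HQp_SO[OF p])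
  have ahgc: "mcar d (\<lambda>n. a n * h n * g)" using ahc gc unfolding mcar_def by (auto intro: sq_mult)
  have g2: "qp_mat_eq p d (seq_mult (\<lambda>n. 1\<^sub>m d) hp) (seq_mult (seq_mult a h) (\<lambda>n. g))"
    using hpe seq_one[OF hpc] unfolding seq_mult_def by simp
  have asq: "\<And>A B C. A \<in> carrier_mat d d \<Longrightarrow> B \<in> carrier_mat d d \<Longrightarrow> C \<in> carrier_mat d d \<Longrightarrow> (A*B)*C = A*(B*(C::rat mat))" by auto
  have canq: "\<And>X. X \<in> carrier_mat d d \<Longrightarrow> Gm gv * (Gim d gv * X) = X" using asq G by (metis left_mult_one_mat)
  have g4: "qp_mat_eq p d (seq_mult (\<lambda>n. 1\<^sub>m d) (conj_Qp d gv hp)) (seq_mult (seq_mult (conj_Qp d gv a) (conj_Qp d gv h)) (\<lambda>n. Gim d gv * g * Gm gv))"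
  proof -
    have cc: "mcar d (conj_Qp d gv hp)" using conj_ASL[OF p d prim gvv hp] by (rule ASL_Qp_mcar)
    have e: "seq_mult (seq_mult (conj_Qp d gv a) (conj_Qp d gv h)) (\<lambda>n. Gim d gv * g * Gm gv) = (\<lambda>n. Gim d gv * (a n * h n * g) * Gm gv)"
    proof (intro ext)
      fix n
      have an: "a n \<in> carrier_mat d d" and hn: "h n \<in> carrier_mat d d" using ahc unfolding mcar_def by auto
      have "Gim d gv * a n * Gm gv * (Gim d gv * h n * Gm gv) * (Gim d gv * g * Gm gv) = Gim d gv * (a n * h n * g) * Gm gv"
        using an hn gc G by (simp add: asq sq_mult canq)
      thus "seq_mult (seq_mult (conj_Qp d gv a) (conj_Qp d gv h)) (\<lambda>n. Gim d gv * g * Gm gv) n = Gim d gv * (a n * h n * g) * Gm gv"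
        unfolding seq_mult_def conj_Qp_def Gim_def Gm_def by simp
    qed
    have Gic: "mcar d (\<lambda>n. Gim d gv)" "mcar d (\<lambda>n. Gm gv)" using G by (auto intro: mcar_const)
    have "qp_mat_eq p d (\<lambda>n. Gim d gv * hp n) (\<lambda>n. Gim d gv * (a n * h n * g))"
      by (rule qeq_cong_right[OF p Gic(1) hpc ahgc mbdd_const[OF p] hpe])
    hence "qp_mat_eq p d (\<lambda>n. Gim d gv * hp n * Gm gv) (\<lambda>n. Gim d gv * (a n * h n * g) * Gm gv)"
      by (intro qeq_cong_left[OF p _ _ Gic(2) _ mbdd_const[OF p]] mcar_mult Gic(1) hpc ahgc)
    thus ?thesis unfolding e seq_one[OF cc] unfolding conj_Qp_def Gim_def Gm_def by simp
  qed
  have geqAB: "geq p d (gmul x0 l) (gmul (gmul u xh) (gam d gv g))"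
    unfolding x0_def lh u_def xh_def gam_def using g1 g2 g3 g4 by (simp add: gR_def)
  have "Ycos p d (gmul x0 l) = Ycos p d (gmul u xh)"
    by (rule Ycos_eq[OF p d prim gvv g G_gcar[OF AG] G_gcar[OF BG] geqAB])
  hence "Ycos p d (gmul x0 l) \<in> O_vh p d v gv kv h"
    unfolding O_vh_def xh_def A0_def using uD by blast
  thus ?thesis unfolding x0_def A0_def using h by blast
qed

end


context fixes p :: nat assumes p: "prime p"
begin

lemma Ovh_disj:
  assumes d: "2 \<le> d" and prim: "primitive_vec d v" and gvv: "valid_gv d v gv" and kvv: "valid_kv d v kv"
    and dc: "double_coset_reps p d v M" and h1: "h1 \<in> M" and h2: "h2 \<in> M"
    and u1: "u1 \<in> DeltaK_LvZp p d v gv" and u2: "u2 \<in> DeltaK_LvZp p d v gv"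
    and eq: "Ycos p d (gmul u1 ((kv, h1), (a_mat d v * kv * map_mat real_of_int gv, conj_Qp d gv h1)))
           = Ycos p d (gmul u2 ((kv, h2), (a_mat d v * kv * map_mat real_of_int gv, conj_Qp d gv h2)))"
  shows "h1 = h2"
proof -
  define A0 where "A0 = a_mat d v * kv * map_mat real_of_int gv"
  have d1: "1 \<le> d" using d by auto
  have vc: "v \<in> carrier_vec d" using prim unfolding primitive_vec_def by auto
  have h1Q: "h1 \<in> H_Qp p d v" and h2Q: "h2 \<in> H_Qp p d v" using h1 h2 dc unfolding double_coset_reps_def by auto
  obtain k1 a1 where uk1: "u1 = ((k1, a1), (k1, conj_Qp d gv a1))" and k1: "k1 \<in> K_set d" and a1: "a1 \<in> H_Zp p d v"
    using u1 unfolding DeltaK_LvZp_def by auto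
  obtain k2 a2 where uk2: "u2 = ((k2, a2), (k2, conj_Qp d gv a2))" and k2: "k2 \<in> K_set d" and a2: "a2 \<in> H_Zp p d v"
    using u2 unfolding DeltaK_LvZp_def by auto
  define A where "A = gmul u1 ((kv, h1), (A0, conj_Qp d gv h1))"
  define B where "B = gmul u2 ((kv, h2), (A0, conj_Qp d gv h2))"
  obtain l where l: "l \<in> Lv_RQp p d v gv" and Al: "A = gmul ((kv, \<lambda>n. 1\<^sub>m d), (A0, \<lambda>n. 1\<^sub>m d)) l"
    using Ovh_eq[OF p d prim gvv kvv u1 h1Q] unfolding A_def A0_def by blast
  have AG: "A \<in> G_set p d" unfolding Al A0_def by (rule Ov_G[OF p d prim gvv kvv l])
  have "A \<in> Ycos p d B" using Ycos_self[OF p d1 AG] eq unfolding A_def B_def A0_def by simp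
  then obtain \<gamma> where \<gamma>: "\<gamma> \<in> Gamma_set p d" and e: "geq p d A (gmul B \<gamma>)" unfolding Ycos_def by auto
  obtain g1 g2 where gg: "\<gamma> = ((map_mat of_rat g1, \<lambda>n. g1), (map_mat of_rat g2, \<lambda>n. g2))"
    and g1: "g1 \<in> SO_set d" "Z_inv_p_mat p d g1"
    using \<gamma> unfolding Gamma_set_def by auto
  have e1: "k1 * kv = k2 * kv * map_mat of_rat g1"
    and e2: "qp_mat_eq p d (seq_mult a1 h1) (seq_mult (seq_mult a2 h2) (\<lambda>n. g1))"
    using e unfolding A_def B_def uk1 uk2 gg by auto
  define R where "R = map_mat (of_rat :: rat \<Rightarrow> real) g1"
  have kso: "kv \<in> SO_set d" using kvv unfolding valid_kv_def by auto
  have kc: "kv \<in> carrier_mat d d" using kso unfolding SO_set_def by auto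
  have k1S: "k1 \<in> SO_set d" and k2S: "k2 \<in> SO_set d" using k1 k2 unfolding K_set_def by auto
  have k1c: "k1 \<in> carrier_mat d d" and k2c: "k2 \<in> carrier_mat d d" using k1S k2S unfolding SO_set_def by auto
  have g1c: "g1 \<in> carrier_mat d d" using g1 unfolding SO_set_def by auto
  have Rc: "R \<in> carrier_mat d d" unfolding R_def using g1c by simp
  have KS: "k2 * kv \<in> SO_set d" by (rule SO_mult[OF k2S kso])
  have KKc: "k2 * kv \<in> carrier_mat d d" "k1 * kv \<in> carrier_mat d d" using k1c k2c kc by (auto intro: sq_mult)
  have Re: "R = transpose_mat (k2 * kv) * (k1 * kv)"
  proof -
    have "transpose_mat (k2 * kv) * (k1 * kv) = transpose_mat (k2 * kv) * ((k2 * kv) * R)"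
      using e1 unfolding R_def by simp
    also have "\<dots> = (transpose_mat (k2 * kv) * (k2 * kv)) * R"
      by (rule assoc_mult_mat[symmetric]) (use KKc Rc in auto)
    also have "transpose_mat (k2 * kv) * (k2 * kv) = 1\<^sub>m d" using KS unfolding SO_set_def by auto
    finally show ?thesis using Rc by simp
  qed
  have vRc: "map_vec real_of_int v \<in> carrier_vec d" using vc by simp
  have ec: "(e_last d :: real vec) \<in> carrier_vec d" unfolding e_last_def by simp
  have vp: "vnorm v > 0" by (rule vnorm_pos[OF prim])
  have k1e: "k1 *\<^sub>v e_last d = e_last d" and k2e: "k2 *\<^sub>v e_last d = e_last d" using k1 k2 unfolding K_set_def by auto
  have k2te: "transpose_mat k2 *\<^sub>v e_last d = e_last d"
  proof -
    have "transpose_mat k2 *\<^sub>v e_last d = transpose_mat k2 *\<^sub>v (k2 *\<^sub>v e_last d)" using k2e by simp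
    also have "\<dots> = (transpose_mat k2 * k2) *\<^sub>v e_last d" by (rule assoc_mult_mat_vec[symmetric]) (use k2c ec in auto)
    also have "transpose_mat k2 * k2 = 1\<^sub>m d" using k2S unfolding SO_set_def by auto
    finally show ?thesis using ec by simp
  qed
  have Rfix: "R *\<^sub>v map_vec real_of_int v = map_vec real_of_int v"
  proof -
    have "(k1 * kv) *\<^sub>v map_vec real_of_int v = k1 *\<^sub>v (kv *\<^sub>v map_vec real_of_int v)"
      by (rule assoc_mult_mat_vec[OF k1c kc vRc])
    also have "kv *\<^sub>v map_vec real_of_int v = vnorm v \<cdot>\<^sub>v e_last d" using kvv unfolding valid_kv_def by auto
    also have "k1 *\<^sub>v (vnorm v \<cdot>\<^sub>v e_last d) = vnorm v \<cdot>\<^sub>v e_last d" using mult_mat_vec[OF k1c ec] k1e by simp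
    finally have 1: "(k1 * kv) *\<^sub>v map_vec real_of_int v = vnorm v \<cdot>\<^sub>v e_last d" .
    have "R *\<^sub>v map_vec real_of_int v = transpose_mat (k2 * kv) *\<^sub>v ((k1 * kv) *\<^sub>v map_vec real_of_int v)"
      unfolding Re by (rule assoc_mult_mat_vec) (use KKc vRc in auto)
    also have "\<dots> = (transpose_mat kv * transpose_mat k2) *\<^sub>v (vnorm v \<cdot>\<^sub>v e_last d)"
      unfolding 1 transpose_mult[OF k2c kc] ..
    also have "\<dots> = transpose_mat kv *\<^sub>v (transpose_mat k2 *\<^sub>v (vnorm v \<cdot>\<^sub>v e_last d))"
      by (rule assoc_mult_mat_vec) (use kc k2c ec in auto)
    also have "transpose_mat k2 *\<^sub>v (vnorm v \<cdot>\<^sub>v e_last d) = vnorm v \<cdot>\<^sub>v e_last d"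
      using mult_mat_vec[of "transpose_mat k2" d d "e_last d" "vnorm v"] k2c ec k2te by simp
    also have "transpose_mat kv *\<^sub>v (vnorm v \<cdot>\<^sub>v e_last d) = vnorm v \<cdot>\<^sub>v (transpose_mat kv *\<^sub>v e_last d)"
      by (rule mult_mat_vec) (use kc ec in auto)
    also have "\<dots> = map_vec real_of_int v" unfolding kvT_e[OF d prim kvv] using vp by (simp add: smult_smult_assoc)
    finally show ?thesis .
  qed
  have g1fix: "g1 *\<^sub>v map_vec rat_of_int v = map_vec rat_of_int v"
    by (rule fix_unmap_rat[OF g1c vc]) (use Rfix in \<open>simp add: R_def\<close>)
  have g1H: "g1 \<in> H_Zinvp p d v" unfolding H_Zinvp_def using g1 g1fix by auto
  have oneH: "1\<^sub>m d \<in> H_Zinvp p d v" by (rule HZinv_one[OF vc])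
  have a1c: "mcar d a1" and h1c: "mcar d h1" using a1 h1Q unfolding H_Zp_def
    by (auto intro: SO_Qp_mcar[OF p] HQp_SO[OF p])
  have "(\<lambda>n. a1 n * h1 n * 1\<^sub>m d) = seq_mult a1 h1"
    unfolding seq_mult_def using a1c h1c unfolding mcar_def by (auto intro!: ext right_mult_one_mat sq_mult)
  moreover have "(\<lambda>n. a2 n * h2 n * g1) = seq_mult (seq_mult a2 h2) (\<lambda>n. g1)" unfolding seq_mult_def by simp
  ultimately have "qp_mat_eq p d (\<lambda>n. a1 n * h1 n * 1\<^sub>m d) (\<lambda>n. a2 n * h2 n * g1)" using e2 by simp
  thus ?thesis using dc h1 h2 a1 a2 oneH g1H unfolding double_coset_reps_def by blast
qed

end

theorem lemma3p4:
  fixes p d :: nat and v :: "int vec" and gv :: "int mat" and kv :: "real mat"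
    and M :: "(nat \<Rightarrow> rat mat) set"
  assumes "2 \<le> d"
    and "primitive_vec d v"
    and "prime p" and "odd p"
    and "valid_gv d v gv"
    and "valid_kv d v kv"
    and "double_coset_reps p d v M"
  shows "O_v p d v gv kv \<subseteq> Y_space p d
    \<and> O_v p d v gv kv = (\<Union>h\<in>M. O_vh p d v gv kv h)
    \<and> (\<forall>h1\<in>M. \<forall>h2\<in>M. h1 \<noteq> h2 \<longrightarrow> O_vh p d v gv kv h1 \<inter> O_vh p d v gv kv h2 = {})"
proof -
  note d = assms(1) and prim = assms(2) and p = assms(3) and gvv = assms(5) and kvv = assms(6) and dc = assms(7)
  have s1: "O_v p d v gv kv \<subseteq> Y_space p d"
  proof
    fix z assume "z \<in> O_v p d v gv kv"
    then obtain l where l: "l \<in> Lv_RQp p d v gv"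
      and z: "z = Ycos p d (gmul ((kv, \<lambda>n. 1\<^sub>m d), (a_mat d v * kv * map_mat real_of_int gv, \<lambda>n. 1\<^sub>m d)) l)"
      unfolding O_v_def by auto
    thus "z \<in> Y_space p d" unfolding Y_space_def using Ov_G[OF p d prim gvv kvv l] by blast
  qed
  have s2: "O_v p d v gv kv \<subseteq> (\<Union>h\<in>M. O_vh p d v gv kv h)"
  proof
    fix z assume "z \<in> O_v p d v gv kv"
    then obtain l where l: "l \<in> Lv_RQp p d v gv"
      and z: "z = Ycos p d (gmul ((kv, \<lambda>n. 1\<^sub>m d), (a_mat d v * kv * map_mat real_of_int gv, \<lambda>n. 1\<^sub>m d)) l)"
      unfolding O_v_def by auto
    thus "z \<in> (\<Union>h\<in>M. O_vh p d v gv kv h)" using Ov_sub[OF p d prim gvv kvv dc l] by blast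
  qed
  have s3: "(\<Union>h\<in>M. O_vh p d v gv kv h) \<subseteq> O_v p d v gv kv"
  proof
    fix z assume "z \<in> (\<Union>h\<in>M. O_vh p d v gv kv h)"
    then obtain h u where h: "h \<in> M" and u: "u \<in> DeltaK_LvZp p d v gv"
      and z: "z = Ycos p d (gmul u ((kv, h), (a_mat d v * kv * map_mat real_of_int gv, conj_Qp d gv h)))"
      unfolding O_vh_def by auto
    have hQ: "h \<in> H_Qp p d v" using h dc unfolding double_coset_reps_def by auto
    obtain l where l: "l \<in> Lv_RQp p d v gv" and le: "gmul u ((kv, h), (a_mat d v * kv * map_mat real_of_int gv, conj_Qp d gv h))
      = gmul ((kv, \<lambda>n. 1\<^sub>m d), (a_mat d v * kv * map_mat real_of_int gv, \<lambda>n. 1\<^sub>m d)) l"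
      using Ovh_eq[OF p d prim gvv kvv u hQ] by blast
    have "Ycos p d (gmul ((kv, \<lambda>n. 1\<^sub>m d), (a_mat d v * kv * map_mat real_of_int gv, \<lambda>n. 1\<^sub>m d)) l) \<in> O_v p d v gv kv"
      unfolding O_v_def using l by blast
    thus "z \<in> O_v p d v gv kv" unfolding z le .
  qed
  have s4: "\<forall>h1\<in>M. \<forall>h2\<in>M. h1 \<noteq> h2 \<longrightarrow> O_vh p d v gv kv h1 \<inter> O_vh p d v gv kv h2 = {}"
  proof (intro ballI impI)
    fix h1 h2 assume h1: "h1 \<in> M" and h2: "h2 \<in> M" and ne: "h1 \<noteq> h2"
    show "O_vh p d v gv kv h1 \<inter> O_vh p d v gv kv h2 = {}"
    proof (rule ccontr)
      assume "O_vh p d v gv kv h1 \<inter> O_vh p d v gv kv h2 \<noteq> {}"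
      then obtain z where "z \<in> O_vh p d v gv kv h1" "z \<in> O_vh p d v gv kv h2" by blast
      then obtain u1 u2 where u1: "u1 \<in> DeltaK_LvZp p d v gv" and u2: "u2 \<in> DeltaK_LvZp p d v gv"
        and "z = Ycos p d (gmul u1 ((kv, h1), (a_mat d v * kv * map_mat real_of_int gv, conj_Qp d gv h1)))"
        and "z = Ycos p d (gmul u2 ((kv, h2), (a_mat d v * kv * map_mat real_of_int gv, conj_Qp d gv h2)))"
        unfolding O_vh_def by auto
      hence "h1 = h2" using Ovh_disj[OF p d prim gvv kvv dc h1 h2 u1 u2] by simp
      thus False using ne by simp
    qed
  qed
  show ?thesis using s1 s2 s3 s4 by blast
qed


end
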